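(* Let $d\geq 6$ and let $\sigma_\bullet$ be the sign pattern $(+,-,+,+,\ldots,+,+,-,+)$ of length $d+1$. Then the set $A(\sigma_\bullet,(2,d-4))$ is non-empty and is not connected; more precisely, it is the union of more than one connected component of the set $R_{3,d}$.
   Context: Identify a monic real polynomial $Q_d=x^d+\sum_{j=0}^{d-1}a_jx^j$ with its coefficient vector $(a_{d-1},\ldots,a_0)\in\mathbb{R}^d$. A sign pattern of length $d+1$ is a sequence of $d+1$ symbols $+$/$-$ beginning with $+$; a polynomial with all coefficients non-zero defines the sign pattern $(+,\operatorname{sign}(a_{d-1}),\ldots,\operatorname{sign}(a_0))$. $R_{3,d}\subset\mathbb{R}^d$ is the set of monic degree-$d$ polynomials with all coefficients $a_0,\ldots,a_{d-1}$ non-zero and with no multiple real root. $\sigma_\bullet=(+,-,+,+,\ldots,+,+,-,+)$ denotes the sign pattern of length $d+1$ in which the coefficients of $x^{d-1}$ and $x^1$ are negative and all other coefficients (including the leading one and the constant term) are positive. $A(\sigma_\bullet,(2,d-4))$ is the set of monic degree-$d$ polynomials with all coefficients non-zero and defining the sign pattern $\sigma_\bullet$, having exactly two positive roots and exactly $d-4$ negative roots, all real roots being simple, and (hence) exactly one pair of complex conjugate non-real roots. *)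

theory Defs
  imports "HOL-Analysis.Analysis" "HOL-Computational_Algebra.Polynomial"
begin

text \<open>Coefficient vectors in R^d are represented as functions a :: nat => real
  with a j = 0 for j >= d (so the coordinates are a 0, ..., a (d-1)); the topology is
  the subspace topology of the product topology on nat => real, which on this
  subspace is the Euclidean topology of R^d.\<close>

definition coeff_space :: "nat \<Rightarrow> (nat \<Rightarrow> real) set" where
  "coeff_space d = {a. \<forall>j\<ge>d. a j = 0}"

definition monic_poly :: "nat \<Rightarrow> (nat \<Rightarrow> real) \<Rightarrow> real poly" where
  "monic_poly d a = monom 1 d + (\<Sum>j<d. monom (a j) j)"

definition R3 :: "nat \<Rightarrow> (nat \<Rightarrow> real) set" where
  "R3 d = {a \<in> coeff_space d. (\<forall>j<d. a j \<noteq> 0) \<and>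
            (\<forall>x::real. poly (monic_poly d a) x = 0 \<longrightarrow> order x (monic_poly d a) = 1)}"

definition sigma_bullet :: "nat \<Rightarrow> (nat \<Rightarrow> real) \<Rightarrow> bool" where
  "sigma_bullet d a = (\<forall>j<d. if j = d - 1 \<or> j = 1 then a j < 0 else a j > 0)"

definition pos_roots :: "real poly \<Rightarrow> nat" where
  "pos_roots p = card {x::real. x > 0 \<and> poly p x = 0}"

definition neg_roots :: "real poly \<Rightarrow> nat" where
  "neg_roots p = card {x::real. x < 0 \<and> poly p x = 0}"

definition A_set :: "nat \<Rightarrow> (nat \<Rightarrow> real) set" where
  "A_set d = {a \<in> R3 d. sigma_bullet d a \<and> pos_roots (monic_poly d a) = 2
                 \<and> neg_roots (monic_poly d a) = d - 4}"

end

theory Submission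
  imports Defs
begin


lemma pderiv_sum: "pderiv (sum f A) = (\<Sum>x\<in>A. pderiv (f x))"
  by (induction A rule: infinite_finite_induct) (auto simp: pderiv_add)


lemma one_root_pos:
  fixes p q :: "real poly"
  assumes z: "poly p z = 0" and e: "\<epsilon> > 0"
    and dq: "\<And>x. \<bar>x - z\<bar> \<le> \<epsilon> \<Longrightarrow> 0 < poly (pderiv q) x"
    and dp: "\<And>x. \<bar>x - z\<bar> \<le> \<epsilon> \<Longrightarrow> 0 < poly (pderiv p) x"
    and c1: "\<bar>poly q (z+\<epsilon>) - poly p (z+\<epsilon>)\<bar> < c" "c \<le> \<bar>poly p (z+\<epsilon>)\<bar>"
    and c2: "\<bar>poly q (z-\<epsilon>) - poly p (z-\<epsilon>)\<bar> < c" "c \<le> \<bar>poly p (z-\<epsilon>)\<bar>"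
  shows "\<exists>!y. poly q y = 0 \<and> \<bar>y - z\<bar> < \<epsilon>"
proof -
  obtain x1 where x1: "z < x1" "x1 < z + \<epsilon>" "poly p (z+\<epsilon>) - poly p z = (z + \<epsilon> - z) * poly (pderiv p) x1"
    using poly_MVT[of z "z+\<epsilon>" p] e by auto
  have "0 < poly (pderiv p) x1" using dp[of x1] x1 by auto
  hence pp: "poly p (z+\<epsilon>) > 0" using x1 z e by simp
  obtain x2 where x2: "z-\<epsilon> < x2" "x2 < z" "poly p z - poly p (z-\<epsilon>) = (z - (z - \<epsilon>)) * poly (pderiv p) x2"
    using poly_MVT[of "z-\<epsilon>" z p] e by auto
  have "0 < poly (pderiv p) x2" using dp[of x2] x2 by auto
  hence "\<epsilon> * poly (pderiv p) x2 > 0" using e by simp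
  hence pn: "poly p (z-\<epsilon>) < 0" using x2 z by simp
  have qp: "poly q (z+\<epsilon>) > 0" using pp c1 by linarith
  have qn: "poly q (z-\<epsilon>) < 0" using pn c2 by linarith
  obtain y where y: "z - \<epsilon> < y" "y < z + \<epsilon>" "poly q y = 0"
    using poly_IVT_pos[of "z-\<epsilon>" "z+\<epsilon>" q] qp qn e by auto
  show ?thesis
  proof (rule ex1I[of _ y])
    show "poly q y = 0 \<and> \<bar>y - z\<bar> < \<epsilon>" using y by auto
  next
    have uniq: "u = v" if "poly q u = 0" "\<bar>u - z\<bar> < \<epsilon>" "poly q v = 0" "\<bar>v - z\<bar> < \<epsilon>" "u \<le> v" for u v
    proof (rule ccontr)
      assume "u \<noteq> v" hence "u < v" using that by auto
      then obtain w where w: "u < w" "w < v" "poly q v - poly q u = (v - u) * poly (pderiv q) w"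
        using poly_MVT[of u v q] by auto
      have "\<bar>w - z\<bar> \<le> \<epsilon>" using w that by auto
      hence "0 < poly (pderiv q) w" using dq by auto
      thus False using w that \<open>u < v\<close> by simp
    qed
    fix u assume u: "poly q u = 0 \<and> \<bar>u - z\<bar> < \<epsilon>"
    have yz: "\<bar>y - z\<bar> < \<epsilon>" using y by auto
    show "u = y" using uniq[of u y] uniq[of y u] y u yz by (cases "u \<le> y") auto
  qed
qed

lemma finite_pos_min:
  fixes f :: "'a \<Rightarrow> real"
  assumes "finite Z" "\<And>z. z \<in> Z \<Longrightarrow> 0 < f z"
  shows "\<exists>e>0. \<forall>z\<in>Z. e \<le> f z"
proof -
  let ?m = "Min (insert 1 (f ` Z))"
  have "?m > 0" using assms by (subst Min_gr_iff) auto
  moreover have "\<forall>z\<in>Z. ?m \<le> f z" using assms by (auto intro: Min_le)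
  ultimately show ?thesis by blast
qed

lemma one_root:
  fixes p q :: "real poly"
  assumes z: "poly p z = 0" and e: "\<epsilon> > 0"
    and dd: "(\<forall>x. \<bar>x - z\<bar> \<le> \<epsilon> \<longrightarrow> 0 < poly (pderiv q) x \<and> 0 < poly (pderiv p) x) \<or>
             (\<forall>x. \<bar>x - z\<bar> \<le> \<epsilon> \<longrightarrow> poly (pderiv q) x < 0 \<and> poly (pderiv p) x < 0)"
    and c1: "\<bar>poly q (z+\<epsilon>) - poly p (z+\<epsilon>)\<bar> < c" "c \<le> \<bar>poly p (z+\<epsilon>)\<bar>"
    and c2: "\<bar>poly q (z-\<epsilon>) - poly p (z-\<epsilon>)\<bar> < c" "c \<le> \<bar>poly p (z-\<epsilon>)\<bar>"
  shows "\<exists>!y. poly q y = 0 \<and> \<bar>y - z\<bar> < \<epsilon>"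
  using dd
proof
  assume "\<forall>x. \<bar>x - z\<bar> \<le> \<epsilon> \<longrightarrow> 0 < poly (pderiv q) x \<and> 0 < poly (pderiv p) x"
  thus ?thesis using one_root_pos[OF z e _ _ c1 c2] by blast
next
  assume h: "\<forall>x. \<bar>x - z\<bar> \<le> \<epsilon> \<longrightarrow> poly (pderiv q) x < 0 \<and> poly (pderiv p) x < 0"
  have "\<exists>!y. poly (-q) y = 0 \<and> \<bar>y - z\<bar> < \<epsilon>"
    apply (rule one_root_pos[of "-p" z \<epsilon> "-q" c])
    using z e h c1 c2 by (auto simp: pderiv_minus abs_minus_commute)
  thus ?thesis by simp
qed

lemma stab_poly:
  fixes p :: "real poly"
  assumes p0: "p \<noteq> 0" and simple: "\<And>x. poly p x = 0 \<Longrightarrow> poly (pderiv p) x \<noteq> 0"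
    and e0: "\<epsilon>0 > 0"
    and sep: "\<And>z z'. poly p z = 0 \<Longrightarrow> poly p z' = 0 \<Longrightarrow> z \<noteq> z' \<Longrightarrow> 2*\<epsilon>0 < \<bar>z - z'\<bar>"
    and Mz: "\<And>z. poly p z = 0 \<Longrightarrow> \<bar>z\<bar> + \<epsilon>0 \<le> M"
  shows "\<exists>\<epsilon>>0. \<epsilon> \<le> \<epsilon>0 \<and> (\<exists>\<eta>>0. \<forall>q.
     (\<forall>x. \<bar>x\<bar> \<le> M \<longrightarrow> \<bar>poly q x - poly p x\<bar> < \<eta> \<and> \<bar>poly (pderiv q) x - poly (pderiv p) x\<bar> < \<eta>) \<longrightarrow>
     (\<forall>y. poly q y = 0 \<longrightarrow> \<bar>y\<bar> \<le> M \<longrightarrow> (\<exists>z. poly p z = 0 \<and> \<bar>y - z\<bar> < \<epsilon>)) \<and>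
     (\<forall>z. poly p z = 0 \<longrightarrow> (\<exists>!y. poly q y = 0 \<and> \<bar>y - z\<bar> < \<epsilon>)))"
proof -
  define Z where "Z = {x. poly p x = 0}"
  have finZ: "finite Z" unfolding Z_def using poly_roots_finite[OF p0] .
  have "\<forall>z\<in>Z. \<exists>e>0. \<forall>x. \<bar>x - z\<bar> < e \<longrightarrow> \<bar>poly (pderiv p) x - poly (pderiv p) z\<bar> < \<bar>poly (pderiv p) z\<bar> / 2"
  proof
    fix z assume "z \<in> Z"
    hence "\<bar>poly (pderiv p) z\<bar> / 2 > 0" using simple unfolding Z_def by auto
    moreover have "isCont (poly (pderiv p)) z" by simp
    ultimately show "\<exists>e>0. \<forall>x. \<bar>x - z\<bar> < e \<longrightarrow> \<bar>poly (pderiv p) x - poly (pderiv p) z\<bar> < \<bar>poly (pderiv p) z\<bar> / 2"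
      unfolding continuous_at_eps_delta dist_real_def by blast
  qed
  then obtain ez where ez: "\<And>z. z \<in> Z \<Longrightarrow> ez z > 0 \<and> (\<forall>x. \<bar>x - z\<bar> < ez z \<longrightarrow> \<bar>poly (pderiv p) x - poly (pderiv p) z\<bar> < \<bar>poly (pderiv p) z\<bar> / 2)"
    by metis
  obtain e1 where e1: "e1 > 0" "\<forall>z\<in>Z. e1 \<le> ez z / 2" using finite_pos_min[OF finZ, of "\<lambda>z. ez z / 2"] ez by auto
  define \<epsilon> where "\<epsilon> = min e1 \<epsilon>0"
  have eps: "\<epsilon> > 0" "\<epsilon> \<le> \<epsilon>0" unfolding \<epsilon>_def using e1 e0 by auto
  obtain c' where c': "c' > 0" "\<forall>z\<in>Z. c' \<le> \<bar>poly (pderiv p) z\<bar> / 2"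
    using finite_pos_min[OF finZ, of "\<lambda>z. \<bar>poly (pderiv p) z\<bar> / 2"] simple unfolding Z_def by auto
  have dp: "(\<forall>x. \<bar>x - z\<bar> \<le> \<epsilon> \<longrightarrow> c' \<le> poly (pderiv p) x) \<or> (\<forall>x. \<bar>x - z\<bar> \<le> \<epsilon> \<longrightarrow> poly (pderiv p) x \<le> - c')"
    if "z \<in> Z" for z
  proof -
    have cl: "\<bar>poly (pderiv p) x - poly (pderiv p) z\<bar> < \<bar>poly (pderiv p) z\<bar> / 2" if "\<bar>x - z\<bar> \<le> \<epsilon>" for x
    proof -
      have "\<epsilon> < ez z" using e1 ez[OF \<open>z\<in>Z\<close>] \<open>z\<in>Z\<close> unfolding \<epsilon>_def by force
      thus ?thesis using ez[OF \<open>z\<in>Z\<close>] that by auto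
    qed
    have cz: "c' \<le> \<bar>poly (pderiv p) z\<bar> / 2" using c' that by auto
    show ?thesis
    proof (cases "poly (pderiv p) z > 0")
      case True
      show ?thesis
      proof (intro disjI1 allI impI)
        fix x assume "\<bar>x - z\<bar> \<le> \<epsilon>"
        from cl[OF this] have "poly (pderiv p) x - poly (pderiv p) z < \<bar>poly (pderiv p) z\<bar> / 2 \<and> - (poly (pderiv p) x - poly (pderiv p) z) < \<bar>poly (pderiv p) z\<bar> / 2"
          by (simp only: abs_less_iff)
        moreover have "\<bar>poly (pderiv p) z\<bar> = poly (pderiv p) z" using True by simp
        ultimately show "c' \<le> poly (pderiv p) x" using cz by linarith
      qed
    next
      case False
      show ?thesis
      proof (intro disjI2 allI impI)
        fix x assume "\<bar>x - z\<bar> \<le> \<epsilon>"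
        from cl[OF this] have "poly (pderiv p) x - poly (pderiv p) z < \<bar>poly (pderiv p) z\<bar> / 2 \<and> - (poly (pderiv p) x - poly (pderiv p) z) < \<bar>poly (pderiv p) z\<bar> / 2"
          by (simp only: abs_less_iff)
        moreover have "\<bar>poly (pderiv p) z\<bar> = - poly (pderiv p) z" using False by simp
        ultimately show "poly (pderiv p) x \<le> - c'" using cz by linarith
      qed
    qed
  qed
  define K where "K = {-M..M} \<inter> (\<Inter>z\<in>Z. {x. \<epsilon> \<le> \<bar>x - z\<bar>})"
  have Kc: "compact K" unfolding K_def
    by (intro compact_Int_closed compact_Icc closed_INT ballI closed_Collect_le continuous_intros)
  have "\<exists>c>0. \<forall>x\<in>K. c \<le> \<bar>poly p x\<bar>"
  proof (cases "K = {}")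
    case True thus ?thesis by (auto intro: exI[of _ 1])
  next
    case False
    have "continuous_on K (\<lambda>x. \<bar>poly p x\<bar>)" by (intro continuous_intros)
    then obtain x0 where x0: "x0 \<in> K" "\<forall>y\<in>K. \<bar>poly p x0\<bar> \<le> \<bar>poly p y\<bar>"
      using continuous_attains_inf[OF Kc False] by blast
    have "poly p x0 \<noteq> 0"
    proof
      assume "poly p x0 = 0" hence "x0 \<in> Z" unfolding Z_def by auto
      thus False using x0(1) eps unfolding K_def by auto
    qed
    thus ?thesis using x0 by (intro exI[of _ "\<bar>poly p x0\<bar>"]) auto
  qed
  then obtain c where c: "c > 0" "\<forall>x\<in>K. c \<le> \<bar>poly p x\<bar>" by blast
  define \<eta> where "\<eta> = min c c'"
  have eta: "\<eta> > 0" unfolding \<eta>_def using c c' by auto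
  have key: "(\<forall>y. poly q y = 0 \<longrightarrow> \<bar>y\<bar> \<le> M \<longrightarrow> (\<exists>z. poly p z = 0 \<and> \<bar>y - z\<bar> < \<epsilon>)) \<and>
     (\<forall>z. poly p z = 0 \<longrightarrow> (\<exists>!y. poly q y = 0 \<and> \<bar>y - z\<bar> < \<epsilon>))" if close: "\<forall>x. \<bar>x\<bar> \<le> M \<longrightarrow> \<bar>poly q x - poly p x\<bar> < \<eta> \<and> \<bar>poly (pderiv q) x - poly (pderiv p) x\<bar> < \<eta>" for q
  proof
    show "\<forall>y. poly q y = 0 \<longrightarrow> \<bar>y\<bar> \<le> M \<longrightarrow> (\<exists>z. poly p z = 0 \<and> \<bar>y - z\<bar> < \<epsilon>)"
    proof (intro allI impI)
      fix y assume y: "poly q y = 0" "\<bar>y\<bar> \<le> M"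
      show "\<exists>z. poly p z = 0 \<and> \<bar>y - z\<bar> < \<epsilon>"
      proof (rule ccontr)
        assume "\<not> ?thesis"
        hence "y \<in> K" unfolding K_def Z_def using y by force
        hence "c \<le> \<bar>poly p y\<bar>" using c by auto
        moreover have "\<bar>poly q y - poly p y\<bar> < \<eta>" using close y by auto
        ultimately show False using y \<eta>_def by auto
      qed
    qed
    show "\<forall>z. poly p z = 0 \<longrightarrow> (\<exists>!y. poly q y = 0 \<and> \<bar>y - z\<bar> < \<epsilon>)"
    proof (intro allI impI)
      fix z assume z: "poly p z = 0"
      hence zZ: "z \<in> Z" unfolding Z_def by auto
      have inM: "\<bar>x\<bar> \<le> M" if "\<bar>x - z\<bar> \<le> \<epsilon>" for x using Mz[OF z] eps that by auto
      have inK: "x \<in> K" if "\<bar>x - z\<bar> = \<epsilon>" for x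
      proof -
        have "\<epsilon> \<le> \<bar>x - z'\<bar>" if "z' \<in> Z" for z'
        proof (cases "z' = z")
          case True thus ?thesis using \<open>\<bar>x - z\<bar> = \<epsilon>\<close> by auto
        next
          case False
          hence "2*\<epsilon>0 < \<bar>z - z'\<bar>" using sep z that unfolding Z_def by auto
          thus ?thesis using \<open>\<bar>x - z\<bar> = \<epsilon>\<close> eps by auto
        qed
        thus ?thesis unfolding K_def using inM[of x] \<open>\<bar>x - z\<bar> = \<epsilon>\<close> by auto
      qed
      show "\<exists>!y. poly q y = 0 \<and> \<bar>y - z\<bar> < \<epsilon>"
      proof (rule one_root[OF z eps(1), of q \<eta>])
        show "(\<forall>x. \<bar>x - z\<bar> \<le> \<epsilon> \<longrightarrow> 0 < poly (pderiv q) x \<and> 0 < poly (pderiv p) x) \<or>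
             (\<forall>x. \<bar>x - z\<bar> \<le> \<epsilon> \<longrightarrow> poly (pderiv q) x < 0 \<and> poly (pderiv p) x < 0)"
          using dp[OF zZ]
        proof
          assume h: "\<forall>x. \<bar>x - z\<bar> \<le> \<epsilon> \<longrightarrow> c' \<le> poly (pderiv p) x"
          show ?thesis
          proof (intro disjI1 allI impI)
            fix x assume "\<bar>x - z\<bar> \<le> \<epsilon>"
            thus "0 < poly (pderiv q) x \<and> 0 < poly (pderiv p) x"
              using h close inM[of x] c' unfolding \<eta>_def by force
          qed
        next
          assume h: "\<forall>x. \<bar>x - z\<bar> \<le> \<epsilon> \<longrightarrow> poly (pderiv p) x \<le> - c'"
          show ?thesis
          proof (intro disjI2 allI impI)
            fix x assume "\<bar>x - z\<bar> \<le> \<epsilon>"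
            thus "poly (pderiv q) x < 0 \<and> poly (pderiv p) x < 0"
              using h close inM[of x] c' unfolding \<eta>_def by force
          qed
        qed
        show "\<bar>poly q (z + \<epsilon>) - poly p (z + \<epsilon>)\<bar> < \<eta>" using close inM[of "z+\<epsilon>"] eps by auto
        show "\<bar>poly q (z - \<epsilon>) - poly p (z - \<epsilon>)\<bar> < \<eta>" using close inM[of "z-\<epsilon>"] eps by auto
        show "\<eta> \<le> \<bar>poly p (z + \<epsilon>)\<bar>" using c inK[of "z+\<epsilon>"] eps unfolding \<eta>_def by auto
        show "\<eta> \<le> \<bar>poly p (z - \<epsilon>)\<bar>" using c inK[of "z-\<epsilon>"] eps unfolding \<eta>_def by auto
      qed
    qed
  qed
  show ?thesis using key eps eta by blast
qed

lemma poly_monic: "poly (monic_poly d a) x = x^d + (\<Sum>j<d. a j * x^j)"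
  unfolding monic_poly_def by (simp add: poly_sum poly_monom)

lemma pderiv_monic: "poly (pderiv (monic_poly d a)) x = of_nat d * x^(d-1) + (\<Sum>j<d. of_nat j * a j * x^(j-1))"
  unfolding monic_poly_def by (simp add: pderiv_add pderiv_sum pderiv_monom poly_sum poly_monom)

lemma coeff_monic_d: "coeff (monic_poly d a) d = 1"
  unfolding monic_poly_def by (simp add: coeff_sum coeff_monom)

lemma monic_nz: "monic_poly d a \<noteq> 0"
  using coeff_monic_d[of d a] by auto

lemma degree_monic: "d \<le> degree (monic_poly d a)"
  using coeff_monic_d[of d a] by (auto intro: le_degree)

lemma monic_at0: "d \<ge> 1 \<Longrightarrow> poly (monic_poly d a) 0 = a 0"
  by (simp add: poly_monic zero_power sum.lessThan_Suc_shift del: sum.lessThan_Suc)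

lemma root_bound:
  assumes "poly (monic_poly d b) y = 0" "d \<ge> 1"
  shows "\<bar>y\<bar> \<le> 1 + (\<Sum>j<d. \<bar>b j\<bar>)"
proof (rule ccontr)
  let ?S = "\<Sum>j<d. \<bar>b j\<bar>"
  assume "\<not> ?thesis"
  hence y: "\<bar>y\<bar> > 1 + ?S" by simp
  have S0: "?S \<ge> 0" by (simp add: sum_nonneg)
  have "y^d = - (\<Sum>j<d. b j * y^j)" using assms(1) unfolding poly_monic by simp
  hence yd: "\<bar>y\<bar>^d = \<bar>\<Sum>j<d. b j * y^j\<bar>" by (metis abs_minus_cancel power_abs)
  have y1: "1 \<le> \<bar>y\<bar>" using y S0 by linarith
  have "\<bar>\<Sum>j<d. b j * y^j\<bar> \<le> (\<Sum>j<d. \<bar>b j\<bar> * \<bar>y\<bar>^j)" by (rule order_trans[OF sum_abs]) (simp add: abs_mult power_abs)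
  also have "\<dots> \<le> (\<Sum>j<d. \<bar>b j\<bar> * \<bar>y\<bar>^(d-1))"
    using y1 by (intro sum_mono mult_left_mono power_increasing) auto
  also have "\<dots> = ?S * \<bar>y\<bar>^(d-1)" by (simp add: sum_distrib_right)
  also have "\<dots> < \<bar>y\<bar> * \<bar>y\<bar>^(d-1)"
    using y S0 y1 by (intro mult_strict_right_mono) (auto simp del: power_abs)
  also have "\<dots> = \<bar>y\<bar>^d" using assms(2) by (metis One_nat_def Suc_pred less_le_trans not_less_eq_eq power_Suc zero_less_one)
  finally show False using yd by simp
qed

lemma close_bound:
  assumes "\<forall>j<d. \<bar>b j - a j\<bar> < \<delta>" "\<bar>x\<bar> \<le> M" "M \<ge> 1" "d \<ge> 1"
  shows "\<bar>poly (monic_poly d b) x - poly (monic_poly d a) x\<bar> \<le> of_nat d * of_nat d * \<delta> * M^d"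
    and "\<bar>poly (pderiv (monic_poly d b)) x - poly (pderiv (monic_poly d a)) x\<bar> \<le> of_nat d * of_nat d * \<delta> * M^d"
proof -
  have "\<bar>b 0 - a 0\<bar> < \<delta>" using assms(1) assms(4) by auto
  hence d0: "\<delta> \<ge> 0" by linarith
  have pw: "\<bar>x\<bar>^k \<le> M^d" if "k \<le> d" for k
  proof -
    have "\<bar>x\<bar>^k \<le> M^k" using assms(2) by (intro power_mono) auto
    also have "\<dots> \<le> M^d" using assms(3) that by (intro power_increasing) auto
    finally show ?thesis .
  qed
  have "poly (monic_poly d b) x - poly (monic_poly d a) x = (\<Sum>j<d. (b j - a j) * x^j)"
    unfolding poly_monic by (simp add: sum_subtractf algebra_simps)
  also have "\<bar>\<dots>\<bar> \<le> (\<Sum>j<d. \<bar>b j - a j\<bar> * \<bar>x\<bar>^j)" by (rule order_trans[OF sum_abs]) (simp add: abs_mult power_abs)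
  also have "\<dots> \<le> (\<Sum>j<d. \<delta> * M^d)"
    using assms(1) d0 pw by (intro sum_mono mult_mono) auto
  also have "\<dots> = of_nat d * \<delta> * M^d" by simp
  also have "\<dots> \<le> of_nat d * of_nat d * \<delta> * M^d"
    using assms(3,4) d0 by (intro mult_right_mono) (auto simp: mult_le_cancel_left1)
  finally show "\<bar>poly (monic_poly d b) x - poly (monic_poly d a) x\<bar> \<le> of_nat d * of_nat d * \<delta> * M^d" .
  have "poly (pderiv (monic_poly d b)) x - poly (pderiv (monic_poly d a)) x = (\<Sum>j<d. of_nat j * (b j - a j) * x^(j-1))"
    unfolding pderiv_monic by (simp add: sum_subtractf algebra_simps)
  also have "\<bar>\<dots>\<bar> \<le> (\<Sum>j<d. of_nat j * (\<bar>b j - a j\<bar> * \<bar>x\<bar>^(j-1)))" by (rule order_trans[OF sum_abs]) (simp add: abs_mult power_abs mult.assoc)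
  also have "\<dots> \<le> (\<Sum>j<d. of_nat d * (\<delta> * M^d))"
    using assms(1) d0 pw by (intro sum_mono mult_mono) auto
  also have "\<dots> = of_nat d * of_nat d * \<delta> * M^d" by simp
  finally show "\<bar>poly (pderiv (monic_poly d b)) x - poly (pderiv (monic_poly d a)) x\<bar> \<le> of_nat d * of_nat d * \<delta> * M^d" .
qed




lemma simple_of_R3:
  assumes "a \<in> R3 d" "d \<ge> 1" "poly (monic_poly d a) x = 0"
  shows "poly (pderiv (monic_poly d a)) x \<noteq> 0"
proof -
  let ?p = "monic_poly d a"
  have o1: "order x ?p = 1" using assms unfolding R3_def by auto
  have "order x ?p = Suc (order x (pderiv ?p))" using order_pderiv[OF monic_nz assms(3)] .
  hence o0: "order x (pderiv ?p) = 0" using o1 by simp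
  have "pderiv ?p \<noteq> 0" using degree_monic[of d a] assms(2) by (auto simp: pderiv_eq_0_iff)
  thus ?thesis using o0 order_eq_0_iff by blast
qed

lemma local_roots:
  assumes aR: "a \<in> R3 d" and d1: "d \<ge> 1" and e0: "e0 > 0"
    and sep: "\<And>z z'. poly (monic_poly d a) z = 0 \<Longrightarrow> poly (monic_poly d a) z' = 0 \<Longrightarrow> z \<noteq> z' \<Longrightarrow> 2*e0 < \<bar>z - z'\<bar>"
  shows "\<exists>\<epsilon>>0. \<epsilon> \<le> e0 \<and> (\<exists>\<delta>>0. \<forall>b. (\<forall>j<d. \<bar>b j - a j\<bar> < \<delta>) \<longrightarrow>
     (\<forall>y. poly (monic_poly d b) y = 0 \<longrightarrow> (\<exists>z. poly (monic_poly d a) z = 0 \<and> \<bar>y - z\<bar> < \<epsilon>)) \<and>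
     (\<forall>z. poly (monic_poly d a) z = 0 \<longrightarrow> (\<exists>!y. poly (monic_poly d b) y = 0 \<and> \<bar>y - z\<bar> < \<epsilon>)))"
proof -
  let ?p = "monic_poly d a"
  define M where "M = 2 + (\<Sum>j<d. \<bar>a j\<bar>) + e0"
  have S0: "(\<Sum>j<d. \<bar>a j\<bar>) \<ge> 0" by (simp add: sum_nonneg)
  have M1: "M \<ge> 1" unfolding M_def using S0 e0 by auto
  have Mz: "\<bar>z\<bar> + e0 \<le> M" if "poly ?p z = 0" for z
    using root_bound[OF that d1] unfolding M_def by auto
  have SP: "\<exists>\<epsilon>>0. \<epsilon> \<le> e0 \<and> (\<exists>\<eta>>0. \<forall>q.
     (\<forall>x. \<bar>x\<bar> \<le> M \<longrightarrow> \<bar>poly q x - poly ?p x\<bar> < \<eta> \<and> \<bar>poly (pderiv q) x - poly (pderiv ?p) x\<bar> < \<eta>) \<longrightarrow>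
     (\<forall>y. poly q y = 0 \<longrightarrow> \<bar>y\<bar> \<le> M \<longrightarrow> (\<exists>z. poly ?p z = 0 \<and> \<bar>y - z\<bar> < \<epsilon>)) \<and>
     (\<forall>z. poly ?p z = 0 \<longrightarrow> (\<exists>!y. poly q y = 0 \<and> \<bar>y - z\<bar> < \<epsilon>)))"
    by (rule stab_poly[OF monic_nz simple_of_R3[OF aR d1] e0 sep Mz])
  obtain \<epsilon> where ee1: "\<epsilon> > 0" "\<epsilon> \<le> e0" and H: "\<exists>\<eta>>0. \<forall>q.
     (\<forall>x. \<bar>x\<bar> \<le> M \<longrightarrow> \<bar>poly q x - poly ?p x\<bar> < \<eta> \<and> \<bar>poly (pderiv q) x - poly (pderiv ?p) x\<bar> < \<eta>) \<longrightarrow>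
     (\<forall>y. poly q y = 0 \<longrightarrow> \<bar>y\<bar> \<le> M \<longrightarrow> (\<exists>z. poly ?p z = 0 \<and> \<bar>y - z\<bar> < \<epsilon>)) \<and>
     (\<forall>z. poly ?p z = 0 \<longrightarrow> (\<exists>!y. poly q y = 0 \<and> \<bar>y - z\<bar> < \<epsilon>))" by (rule exE[OF SP], (erule conjE)+, rule that)
  obtain \<eta> where ee2: "\<eta> > 0" and st0: "\<forall>q.
     (\<forall>x. \<bar>x\<bar> \<le> M \<longrightarrow> \<bar>poly q x - poly ?p x\<bar> < \<eta> \<and> \<bar>poly (pderiv q) x - poly (pderiv ?p) x\<bar> < \<eta>) \<longrightarrow>
     (\<forall>y. poly q y = 0 \<longrightarrow> \<bar>y\<bar> \<le> M \<longrightarrow> (\<exists>z. poly ?p z = 0 \<and> \<bar>y - z\<bar> < \<epsilon>)) \<and>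
     (\<forall>z. poly ?p z = 0 \<longrightarrow> (\<exists>!y. poly q y = 0 \<and> \<bar>y - z\<bar> < \<epsilon>))" by (rule exE[OF H], (erule conjE)+, rule that)
  note st = st0[rule_format]
  have ee: "\<epsilon> > 0" "\<epsilon> \<le> e0" "\<eta> > 0" using ee1 ee2 by auto
  define K where "K = 2 * of_nat d * of_nat d * M^d"
  have K0: "K > 0" unfolding K_def using d1 M1 by auto
  define \<delta> where "\<delta> = min (1 / (2 * of_nat d)) (\<eta> / K)"
  have dpos: "\<delta> > 0" unfolding \<delta>_def using d1 ee K0 by auto
  have key: "(\<forall>y. poly (monic_poly d b) y = 0 \<longrightarrow> (\<exists>z. poly ?p z = 0 \<and> \<bar>y - z\<bar> < \<epsilon>)) \<and>
     (\<forall>z. poly ?p z = 0 \<longrightarrow> (\<exists>!y. poly (monic_poly d b) y = 0 \<and> \<bar>y - z\<bar> < \<epsilon>))"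
    if cl: "\<forall>j<d. \<bar>b j - a j\<bar> < \<delta>" for b
  proof -
    have small: "of_nat d * of_nat d * \<delta> * M^d < \<eta>"
    proof -
      have "\<delta> \<le> \<eta> / K" unfolding \<delta>_def by auto
      hence "\<delta> * K \<le> \<eta>" using K0 by (simp add: pos_le_divide_eq)
      moreover have "of_nat d * of_nat d * \<delta> * M^d < \<delta> * K"
        unfolding K_def using dpos d1 M1 by (simp add: algebra_simps)
      ultimately show ?thesis by linarith
    qed
    have close: "\<forall>x. \<bar>x\<bar> \<le> M \<longrightarrow> \<bar>poly (monic_poly d b) x - poly ?p x\<bar> < \<eta> \<and> \<bar>poly (pderiv (monic_poly d b)) x - poly (pderiv ?p) x\<bar> < \<eta>"
      using close_bound[OF cl _ M1 d1] small by (meson le_less_trans)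
    have "(\<Sum>j<d. \<bar>b j\<bar>) \<le> (\<Sum>j<d. \<bar>a j\<bar> + \<delta>)"
      using cl by (intro sum_mono) (auto simp: abs_le_iff abs_less_iff)
    also have "\<dots> = (\<Sum>j<d. \<bar>a j\<bar>) + of_nat d * \<delta>" by (simp add: sum.distrib)
    also have "of_nat d * \<delta> \<le> 1/2"
    proof -
      have "\<delta> \<le> 1 / (2 * of_nat d)" unfolding \<delta>_def by auto
      thus ?thesis using d1 by (simp add: field_simps)
    qed
    finally have sb: "(\<Sum>j<d. \<bar>b j\<bar>) \<le> (\<Sum>j<d. \<bar>a j\<bar>) + 1/2" by simp
    have yM: "\<bar>y\<bar> \<le> M" if "poly (monic_poly d b) y = 0" for y
      using root_bound[OF that d1] sb e0 unfolding M_def by auto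
    have st': "(\<forall>y. poly (monic_poly d b) y = 0 \<longrightarrow> \<bar>y\<bar> \<le> M \<longrightarrow> (\<exists>z. poly ?p z = 0 \<and> \<bar>y - z\<bar> < \<epsilon>)) \<and>
     (\<forall>z. poly ?p z = 0 \<longrightarrow> (\<exists>!y. poly (monic_poly d b) y = 0 \<and> \<bar>y - z\<bar> < \<epsilon>))"
      using st0 close by blast
    show ?thesis using st' yM by blast
  qed
  show ?thesis
    apply (rule exI[of _ \<epsilon>])
    apply (rule conjI[OF ee(1)], rule conjI[OF ee(2)], rule exI[of _ \<delta>], rule conjI[OF dpos], rule allI, rule impI)
    by (rule key)
qed

lemma card_match:
  assumes fP: "finite P" and fQ: "finite Q"
    and ex: "\<And>y. y \<in> Q \<Longrightarrow> \<exists>z\<in>P. R y z"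
    and ex1: "\<And>z. z \<in> P \<Longrightarrow> \<exists>!y. y \<in> Q \<and> R y z"
    and funR: "\<And>y z z'. y \<in> Q \<Longrightarrow> z \<in> P \<Longrightarrow> z' \<in> P \<Longrightarrow> R y z \<Longrightarrow> R y z' \<Longrightarrow> z = z'"
  shows "card Q = card P"
proof (rule antisym)
  define g where "g y = (SOME z. z \<in> P \<and> R y z)" for y
  have g: "g y \<in> P \<and> R y (g y)" if "y \<in> Q" for y
    unfolding g_def using ex[OF that] by (metis (no_types, lifting) someI_ex)
  have "inj_on g Q"
  proof (rule inj_onI)
    fix y y' assume "y \<in> Q" "y' \<in> Q" "g y = g y'"
    thus "y = y'" using g[of y] g[of y'] ex1[of "g y"] by metis
  qed
  moreover have "g ` Q \<subseteq> P" using g by auto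
  ultimately show "card Q \<le> card P" using card_inj_on_le fP by blast
next
  define f where "f z = (THE y. y \<in> Q \<and> R y z)" for z
  have f: "f z \<in> Q \<and> R (f z) z" if "z \<in> P" for z
    unfolding f_def using ex1[OF that] by (rule theI')
  have "inj_on f P"
  proof (rule inj_onI)
    fix z z' assume "z \<in> P" "z' \<in> P" "f z = f z'"
    thus "z = z'" using f[of z] f[of z'] funR by metis
  qed
  moreover have "f ` P \<subseteq> Q" using f by auto
  ultimately show "card P \<le> card Q" using card_inj_on_le fQ by blast
qed

definition has_less :: "nat \<Rightarrow> (nat \<Rightarrow> real) \<Rightarrow> bool" where
  "has_less d a = (\<exists>r s. 0 < r \<and> 0 < s \<and> poly (monic_poly d a) r = 0 \<and> poly (monic_poly d a) (-s) = 0 \<and> r < s)"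

definition all_greater :: "nat \<Rightarrow> (nat \<Rightarrow> real) \<Rightarrow> bool" where
  "all_greater d a = (\<forall>r s. 0 < r \<longrightarrow> 0 < s \<longrightarrow> poly (monic_poly d a) r = 0 \<longrightarrow> poly (monic_poly d a) (-s) = 0 \<longrightarrow> s < r)"

lemma stable_R3:
  assumes aR: "a \<in> R3 d" and d1: "d \<ge> 1"
  shows "\<exists>\<delta>>0. \<forall>b. (\<forall>j<d. \<bar>b j - a j\<bar> < \<delta>) \<longrightarrow>
     pos_roots (monic_poly d b) = pos_roots (monic_poly d a) \<and>
     neg_roots (monic_poly d b) = neg_roots (monic_poly d a) \<and>
     (has_less d a \<longrightarrow> has_less d b) \<and> (all_greater d a \<longrightarrow> all_greater d b)"
proof -
  let ?p = "monic_poly d a"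
  define Z where "Z = {x. poly ?p x = 0}"
  have finZ: "finite Z" unfolding Z_def using poly_roots_finite[OF monic_nz] .
  define W where "W = Z \<union> uminus ` Z \<union> {0}"
  have finW: "finite W" unfolding W_def using finZ by auto
  define PP where "PP = {(u,v). u \<in> W \<and> v \<in> W \<and> u \<noteq> v}"
  have "PP \<subseteq> W \<times> W" unfolding PP_def by auto
  hence finPP: "finite PP" using finW finite_subset by blast
  obtain e where e: "e > 0" "\<forall>uv\<in>PP. e \<le> \<bar>fst uv - snd uv\<bar>"
    using finite_pos_min[OF finPP, of "\<lambda>uv. \<bar>fst uv - snd uv\<bar>"] unfolding PP_def by auto
  have eW: "e \<le> \<bar>u - v\<bar>" if "u \<in> W" "v \<in> W" "u \<noteq> v" for u v
    using e(2) that unfolding PP_def by fastforce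
  have a0: "a 0 \<noteq> 0" using aR d1 unfolding R3_def by auto
  have z0: "z \<noteq> 0" if "poly ?p z = 0" for z using that monic_at0[OF d1, of a] a0 by auto
  have ze: "e \<le> \<bar>z\<bar>" if "poly ?p z = 0" for z
    using eW[of z 0] z0[OF that] that unfolding W_def Z_def by auto
  define e0 where "e0 = e / 3"
  have e0: "e0 > 0" unfolding e0_def using e by auto
  have sep: "2*e0 < \<bar>z - z'\<bar>" if "poly ?p z = 0" "poly ?p z' = 0" "z \<noteq> z'" for z z'
    using eW[of z z'] that e unfolding W_def Z_def e0_def by auto
  note LR = local_roots[OF aR d1 e0 sep]
  obtain \<epsilon> where ee: "\<epsilon> > 0" "\<epsilon> \<le> e0" and H: "\<exists>\<delta>>0. \<forall>b. (\<forall>j<d. \<bar>b j - a j\<bar> < \<delta>) \<longrightarrow>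
     (\<forall>y. poly (monic_poly d b) y = 0 \<longrightarrow> (\<exists>z. poly (monic_poly d a) z = 0 \<and> \<bar>y - z\<bar> < \<epsilon>)) \<and>
     (\<forall>z. poly (monic_poly d a) z = 0 \<longrightarrow> (\<exists>!y. poly (monic_poly d b) y = 0 \<and> \<bar>y - z\<bar> < \<epsilon>))"
    using LR by blast
  obtain \<delta> where dpos: "\<delta> > 0" and L: "\<forall>b. (\<forall>j<d. \<bar>b j - a j\<bar> < \<delta>) \<longrightarrow>
     (\<forall>y. poly (monic_poly d b) y = 0 \<longrightarrow> (\<exists>z. poly (monic_poly d a) z = 0 \<and> \<bar>y - z\<bar> < \<epsilon>)) \<and>
     (\<forall>z. poly (monic_poly d a) z = 0 \<longrightarrow> (\<exists>!y. poly (monic_poly d b) y = 0 \<and> \<bar>y - z\<bar> < \<epsilon>))"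
    by (rule exE[OF H], (erule conjE)+, rule that)
  have key: "pos_roots (monic_poly d b) = pos_roots ?p \<and>
     neg_roots (monic_poly d b) = neg_roots ?p \<and>
     (has_less d a \<longrightarrow> has_less d b) \<and> (all_greater d a \<longrightarrow> all_greater d b)"
    if cl: "\<forall>j<d. \<bar>b j - a j\<bar> < \<delta>" for b
  proof -
    let ?q = "monic_poly d b"
    have L1: "\<And>y. poly ?q y = 0 \<Longrightarrow> \<exists>z. poly ?p z = 0 \<and> \<bar>y - z\<bar> < \<epsilon>"
      and L2: "\<And>z. poly ?p z = 0 \<Longrightarrow> \<exists>!y. poly ?q y = 0 \<and> \<bar>y - z\<bar> < \<epsilon>"
      using L cl by blast+
    have eps3: "3 * \<epsilon> \<le> e" using ee unfolding e0_def by auto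
    have sgn: "(0 < y \<longleftrightarrow> 0 < z) \<and> (y < 0 \<longleftrightarrow> z < 0)" if "poly ?p z = 0" "\<bar>y - z\<bar> < \<epsilon>" for y z
      using ze[OF that(1)] that(2) eps3 ee by auto
    have funr: "z = z'" if "poly ?p z = 0" "poly ?p z' = 0" "\<bar>y - z\<bar> < \<epsilon>" "\<bar>y - z'\<bar> < \<epsilon>" for y z z'
      using sep[OF that(1,2)] that(3,4) ee by (cases "z = z'") auto
    have finQ: "finite {y. poly ?q y = 0}" using poly_roots_finite[OF monic_nz] .
    have pos: "pos_roots ?q = pos_roots ?p" unfolding pos_roots_def
    proof (rule card_match[where R = "\<lambda>y z. \<bar>y - z\<bar> < \<epsilon>"])
      show "finite {x. 0 < x \<and> poly ?p x = 0}" using finZ unfolding Z_def by (auto intro: finite_subset)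
      show "finite {x. 0 < x \<and> poly ?q x = 0}" using finQ by (auto intro: finite_subset)
      show "\<exists>z\<in>{x. 0 < x \<and> poly ?p x = 0}. \<bar>y - z\<bar> < \<epsilon>" if "y \<in> {x. 0 < x \<and> poly ?q x = 0}" for y
        using L1[of y] that sgn by blast
      show "\<exists>!y. y \<in> {x. 0 < x \<and> poly ?q x = 0} \<and> \<bar>y - z\<bar> < \<epsilon>" if "z \<in> {x. 0 < x \<and> poly ?p x = 0}" for z
      proof -
        have zr: "poly ?p z = 0" using that by auto
        obtain y where y: "poly ?q y = 0" "\<bar>y - z\<bar> < \<epsilon>" and u: "\<And>y'. poly ?q y' = 0 \<and> \<bar>y' - z\<bar> < \<epsilon> \<Longrightarrow> y' = y"
          using L2[OF zr] by blast
        show ?thesis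
          apply (rule ex1I[of _ y])
           apply (simp only: mem_Collect_eq)
          using y sgn[OF zr y(2)] that apply simp
          using u by blast
      qed
      show "z = z'" if "y \<in> {x. 0 < x \<and> poly ?q x = 0}" "z \<in> {x. 0 < x \<and> poly ?p x = 0}" "z' \<in> {x. 0 < x \<and> poly ?p x = 0}" "\<bar>y - z\<bar> < \<epsilon>" "\<bar>y - z'\<bar> < \<epsilon>" for y z z'
        using funr that by auto
    qed
    have neg: "neg_roots ?q = neg_roots ?p" unfolding neg_roots_def
    proof (rule card_match[where R = "\<lambda>y z. \<bar>y - z\<bar> < \<epsilon>"])
      show "finite {x. x < 0 \<and> poly ?p x = 0}" using finZ unfolding Z_def by (auto intro: finite_subset)
      show "finite {x. x < 0 \<and> poly ?q x = 0}" using finQ by (auto intro: finite_subset)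
      show "\<exists>z\<in>{x. x < 0 \<and> poly ?p x = 0}. \<bar>y - z\<bar> < \<epsilon>" if "y \<in> {x. x < 0 \<and> poly ?q x = 0}" for y
        using L1[of y] that sgn by blast
      show "\<exists>!y. y \<in> {x. x < 0 \<and> poly ?q x = 0} \<and> \<bar>y - z\<bar> < \<epsilon>" if "z \<in> {x. x < 0 \<and> poly ?p x = 0}" for z
      proof -
        have zr: "poly ?p z = 0" using that by auto
        obtain y where y: "poly ?q y = 0" "\<bar>y - z\<bar> < \<epsilon>" and u: "\<And>y'. poly ?q y' = 0 \<and> \<bar>y' - z\<bar> < \<epsilon> \<Longrightarrow> y' = y"
          using L2[OF zr] by blast
        show ?thesis
          apply (rule ex1I[of _ y])
           apply (simp only: mem_Collect_eq)
          using y sgn[OF zr y(2)] that apply simp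
          using u by blast
      qed
      show "z = z'" if "y \<in> {x. x < 0 \<and> poly ?q x = 0}" "z \<in> {x. x < 0 \<and> poly ?p x = 0}" "z' \<in> {x. x < 0 \<and> poly ?p x = 0}" "\<bar>y - z\<bar> < \<epsilon>" "\<bar>y - z'\<bar> < \<epsilon>" for y z z'
        using funr that by auto
    qed
    have hl: "has_less d b" if "has_less d a"
    proof -
      obtain r s where rs: "0 < r" "0 < s" "poly ?p r = 0" "poly ?p (-s) = 0" "r < s"
        using \<open>has_less d a\<close> unfolding has_less_def by blast
      have "r \<in> W" "s \<in> W" unfolding W_def Z_def using rs by (auto intro: image_eqI[of s uminus "-s"])
      hence gap: "e \<le> s - r" using eW[of r s] rs by auto
      obtain y where y: "poly ?q y = 0" "\<bar>y - r\<bar> < \<epsilon>" using L2[OF rs(3)] by blast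
      obtain t where t: "poly ?q t = 0" "\<bar>t - (-s)\<bar> < \<epsilon>" using L2[OF rs(4)] by blast
      show ?thesis unfolding has_less_def
        apply (rule exI[of _ y], rule exI[of _ "-t"])
        using y t gap eps3 ee rs ze[OF rs(3)] ze[OF rs(4)] by auto
    qed
    have ag: "all_greater d b" if "all_greater d a"
      unfolding all_greater_def
    proof (intro allI impI)
      fix y t assume yt: "0 < y" "0 < t" "poly ?q y = 0" "poly ?q (-t) = 0"
      obtain r where r: "poly ?p r = 0" "\<bar>y - r\<bar> < \<epsilon>" using L1[OF yt(3)] by blast
      obtain z where z: "poly ?p z = 0" "\<bar>-t - z\<bar> < \<epsilon>" using L1[OF yt(4)] by blast
      have "0 < r" using sgn[OF r] yt by auto
      have "z < 0" using sgn[OF z] yt by auto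
      have "-z < r" using \<open>all_greater d a\<close> unfolding all_greater_def
        using \<open>0 < r\<close> \<open>z < 0\<close> r z by auto
      have "r \<in> W" "-z \<in> W" unfolding W_def Z_def using r z by auto
      hence gap: "e \<le> r - (-z)" using eW[of r "-z"] \<open>-z < r\<close> by auto
      show "t < y" using gap r z eps3 ee by auto
    qed
    show ?thesis using pos neg hl ag by blast
  qed
  show ?thesis
    apply (rule exI[of _ \<delta>])
    apply (rule conjI[OF dpos], rule allI, rule impI)
    by (rule key)
qed




definition cf :: "nat \<Rightarrow> (nat \<Rightarrow> real) \<Rightarrow> nat \<Rightarrow> real" where
  "cf d a j = (if j = d then 1 else a j)"

lemma poly_cf: "poly (monic_poly d a) x = (\<Sum>j\<le>d. cf d a j * x^j)"
proof -
  have "(\<Sum>j\<le>d. cf d a j * x^j) = (\<Sum>j<Suc d. cf d a j * x^j)" by (simp only: lessThan_Suc_atMost)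
  also have "\<dots> = (\<Sum>j<d. cf d a j * x^j) + x^d" by (simp add: cf_def)
  also have "(\<Sum>j<d. cf d a j * x^j) = (\<Sum>j<d. a j * x^j)" by (rule sum.cong) (auto simp: cf_def)
  finally show ?thesis by (simp add: poly_monic)
qed

definition Ev :: "nat \<Rightarrow> (nat \<Rightarrow> real) \<Rightarrow> real \<Rightarrow> real" where
  "Ev d a x = (\<Sum>j\<le>d. if even j then cf d a j * x^j else 0)"
definition Od :: "nat \<Rightarrow> (nat \<Rightarrow> real) \<Rightarrow> real \<Rightarrow> real" where
  "Od d a x = (\<Sum>j\<le>d. if odd j then cf d a j * x^j else 0)"

lemma Q_pos: "poly (monic_poly d a) x = Ev d a x + Od d a x"
  unfolding poly_cf Ev_def Od_def by (auto simp add: sum.distrib[symmetric] intro!: sum.cong)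

lemma Q_neg: "poly (monic_poly d a) (-x) = Ev d a x - Od d a x"
  unfolding poly_cf Ev_def Od_def by (auto simp add: sum_subtractf[symmetric] intro!: sum.cong)

lemma sb_cf_pos: "sigma_bullet d a \<Longrightarrow> j \<le> d \<Longrightarrow> j \<noteq> d - 1 \<Longrightarrow> j \<noteq> 1 \<Longrightarrow> cf d a j > 0"
  unfolding sigma_bullet_def cf_def by (cases "j = d") auto

lemma even_case:
  assumes sb: "sigma_bullet d a" and ev: "even d" and r: "0 < r"
  shows "Ev d a r > 0"
  unfolding Ev_def
proof (rule sum_pos2[of _ d])
  show "0 < (if even d then cf d a d * r ^ d else 0)" using ev r by (simp add: cf_def)
  fix j assume j: "j \<in> {..d}"
  show "0 \<le> (if even j then cf d a j * r ^ j else 0)"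
  proof (cases "even j")
    case True
    have "j \<noteq> 1" using True by auto
    moreover have "j \<noteq> d - 1 \<or> d = 0" using True ev by (cases d) auto
    ultimately have "cf d a j > 0 \<or> d = 0" using sb_cf_pos[OF sb, of j] j by auto
    moreover have "d = 0 \<Longrightarrow> cf d a j > 0" using j by (simp add: cf_def)
    ultimately show ?thesis using True r by (auto intro: less_imp_le)
  qed simp
qed auto

lemma pow_split: "(y::real)^k = y^j * y^(k - j)" if "j \<le> k" for j k
  using that by (simp add: power_add[symmetric])

lemma odd_Ev_mono:
  assumes sb: "sigma_bullet d a" and od: "odd d" and d3: "d \<ge> 3" and x: "0 < x" "x < y"
  shows "Ev d a y * x^(d-1) < Ev d a x * y^(d-1)"
proof -
  have d1: "d \<ge> 1" using od by (cases d) auto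
  have "Ev d a x * y^(d-1) - Ev d a y * x^(d-1) = (\<Sum>j\<le>d. if even j then cf d a j * (x^j * y^(d-1) - y^j * x^(d-1)) else 0)"
  proof -
    have e1: "Ev d a x * y^(d-1) = (\<Sum>j\<le>d. if even j then cf d a j * x^j * y^(d-1) else 0)"
      unfolding Ev_def sum_distrib_right by (rule sum.cong) auto
    have e2: "Ev d a y * x^(d-1) = (\<Sum>j\<le>d. if even j then cf d a j * y^j * x^(d-1) else 0)"
      unfolding Ev_def sum_distrib_right by (rule sum.cong) auto
    show ?thesis unfolding e1 e2 sum_subtractf[symmetric] by (rule sum.cong) (auto simp: algebra_simps)
  qed
  also have "\<dots> > 0"
  proof (rule sum_pos2[of _ 0])
    have "cf d a 0 > 0" using sb_cf_pos[OF sb, of 0] d3 by auto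
    moreover have "x^(d-1) < y^(d-1)" using x d3 by (intro power_strict_mono) auto
    ultimately show "0 < (if even 0 then cf d a 0 * (x^0 * y^(d-1) - y^0 * x^(d-1)) else 0)" by simp
    fix j assume j: "j \<in> {..d}"
    show "0 \<le> (if even j then cf d a j * (x^j * y^(d-1) - y^j * x^(d-1)) else 0)"
    proof (cases "even j")
      case True
      have jd: "j \<le> d - 1" using True od j by (cases "j = d") auto
      have "x^j * y^(d-1) - y^j * x^(d-1) = x^j * y^j * (y^(d-1-j) - x^(d-1-j))"
        using pow_split[OF jd, of y] pow_split[OF jd, of x] by (simp add: algebra_simps)
      also have "\<dots> \<ge> 0" using x power_mono[of x y "d-1-j"] by (intro mult_nonneg_nonneg) auto
      finally have nn: "x^j * y^(d-1) - y^j * x^(d-1) \<ge> 0" .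
      show ?thesis
      proof (cases "j = d - 1")
        case True thus ?thesis by simp
      next
        case False
        hence "cf d a j > 0" using sb_cf_pos[OF sb, of j] j \<open>even j\<close> by auto
        thus ?thesis using nn True by simp
      qed
    qed simp
  qed auto
  finally show ?thesis by simp
qed

lemma odd_Od_mono:
  assumes sb: "sigma_bullet d a" and od: "odd d" and d3: "d \<ge> 3" and x: "0 < x" "x < y"
  shows "Od d a x * y < Od d a y * x"
proof -
  have "Od d a y * x - Od d a x * y = (\<Sum>j\<le>d. if odd j then cf d a j * (y^j * x - x^j * y) else 0)"
  proof -
    have e1: "Od d a y * x = (\<Sum>j\<le>d. if odd j then cf d a j * y^j * x else 0)"
      unfolding Od_def sum_distrib_right by (rule sum.cong) auto
    have e2: "Od d a x * y = (\<Sum>j\<le>d. if odd j then cf d a j * x^j * y else 0)"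
      unfolding Od_def sum_distrib_right by (rule sum.cong) auto
    show ?thesis unfolding e1 e2 sum_subtractf[symmetric] by (rule sum.cong) (auto simp: algebra_simps)
  qed
  also have "\<dots> > 0"
  proof (rule sum_pos2[of _ d])
    have "x^(d-1) < y^(d-1)" using x d3 by (intro power_strict_mono) auto
    hence "x * y * x^(d-1) < x * y * y^(d-1)" using x by simp
    moreover have "y^d * x - x^d * y = x * y * (y^(d-1) - x^(d-1))"
      using d3 by (cases d) (auto simp: algebra_simps)
    ultimately show "0 < (if odd d then cf d a d * (y^d * x - x^d * y) else 0)" using od by (simp add: cf_def algebra_simps)
    fix j assume j: "j \<in> {..d}"
    show "0 \<le> (if odd j then cf d a j * (y^j * x - x^j * y) else 0)"
    proof (cases "odd j")
      case True
      hence j1: "j \<ge> 1" by (cases j) auto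
      have "y^j * x - x^j * y = x * y * (y^(j-1) - x^(j-1))"
        using j1 by (cases j) (auto simp: algebra_simps)
      also have "\<dots> \<ge> 0" using x power_mono[of x y "j-1"] by (intro mult_nonneg_nonneg) auto
      finally have nn: "y^j * x - x^j * y \<ge> 0" .
      show ?thesis
      proof (cases "j = 1")
        case True thus ?thesis by simp
      next
        case False
        have "j \<noteq> d - 1" using True od by auto
        hence "cf d a j > 0" using sb_cf_pos[OF sb, of j] j False by auto
        thus ?thesis using nn True by simp
      qed
    qed simp
  qed auto
  finally show ?thesis by simp
qed

lemma no_sym_root:
  assumes sb: "sigma_bullet d a" and d6: "d \<ge> 6" and r: "0 < r"
    and q1: "poly (monic_poly d a) r = 0" and q2: "poly (monic_poly d a) (-r) = 0"
    and nr: "neg_roots (monic_poly d a) = d - 4"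
  shows False
proof -
  have E0: "Ev d a r = 0" and O0: "Od d a r = 0" using q1 q2 Q_pos[of d a r] Q_neg[of d a r] by auto
  show False
  proof (cases "even d")
    case True thus False using even_case[OF sb True r] E0 by simp
  next
    case False
    hence od: "odd d" by simp
    have d3: "d \<ge> 3" using d6 by simp
    have sub: "{x. x < 0 \<and> poly (monic_poly d a) x = 0} \<subseteq> {-r}"
    proof
      fix x assume "x \<in> {x. x < 0 \<and> poly (monic_poly d a) x = 0}"
      hence x: "x < 0" "poly (monic_poly d a) x = 0" by auto
      define t where "t = -x"
      have t: "0 < t" "Ev d a t = Od d a t" using x Q_neg[of d a t] unfolding t_def by auto
      have "t = r"
      proof (rule ccontr)
        assume "t \<noteq> r"
        hence "t < r \<or> r < t" by auto
        thus False
        proof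
          assume tr: "t < r"
          have "Ev d a r * t^(d-1) < Ev d a t * r^(d-1)" by (rule odd_Ev_mono[OF sb od d3 t(1) tr])
          hence "0 < Ev d a t * r^(d-1)" using E0 by simp
          hence e: "Ev d a t > 0" using r by (simp add: zero_less_mult_iff)
          have "Od d a t * r < Od d a r * t" by (rule odd_Od_mono[OF sb od d3 t(1) tr])
          hence "Od d a t < 0" using O0 r by (simp add: mult_less_0_iff)
          thus False using e t by simp
        next
          assume rt: "r < t"
          have "Ev d a t * r^(d-1) < Ev d a r * t^(d-1)" by (rule odd_Ev_mono[OF sb od d3 r rt])
          hence "Ev d a t * r^(d-1) < 0" using E0 by simp
          hence e: "Ev d a t < 0" using r by (simp add: mult_less_0_iff)
          have "Od d a r * t < Od d a t * r" by (rule odd_Od_mono[OF sb od d3 r rt])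
          hence "Od d a t > 0" using O0 r by (simp add: zero_less_mult_iff)
          thus False using e t by simp
        qed
      qed
      thus "x \<in> {-r}" unfolding t_def by simp
    qed
    have "neg_roots (monic_poly d a) \<le> card {-r}" unfolding neg_roots_def
      by (rule card_mono[OF _ sub]) simp
    thus False using nr d6 by simp
  qed
qed




definition Nb :: "nat \<Rightarrow> (nat \<Rightarrow> real) \<Rightarrow> real \<Rightarrow> (nat \<Rightarrow> real) set" where
  "Nb d a \<delta> = {b. \<forall>j<d. \<bar>b j - a j\<bar> < \<delta>}"

lemma open_Nb: "open (Nb d a \<delta>)"
proof -
  have "Nb d a \<delta> = (\<Inter>j\<in>{..<d}. {b. \<bar>b j - a j\<bar> < \<delta>})" unfolding Nb_def by auto
  moreover have "open {b::nat\<Rightarrow>real. \<bar>b j - a j\<bar> < \<delta>}" for j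
    by (intro open_Collect_less continuous_intros continuous_on_product_coordinates)
  ultimately show ?thesis by (auto intro: open_INT)
qed

lemma Nb_self: "\<delta> > 0 \<Longrightarrow> a \<in> Nb d a \<delta>"
  unfolding Nb_def by auto

lemma sb_stable:
  assumes "a \<in> R3 d"
  shows "\<exists>\<delta>>0. \<forall>b. (\<forall>j<d. \<bar>b j - a j\<bar> < \<delta>) \<longrightarrow> (sigma_bullet d b \<longleftrightarrow> sigma_bullet d a)"
proof -
  have nz: "\<forall>j<d. a j \<noteq> 0" using assms unfolding R3_def by auto
  obtain e where e: "e > 0" "\<forall>j\<in>{..<d}. e \<le> \<bar>a j\<bar>"
    using finite_pos_min[of "{..<d}" "\<lambda>j. \<bar>a j\<bar>"] nz by auto
  have "(sigma_bullet d b \<longleftrightarrow> sigma_bullet d a)" if "\<forall>j<d. \<bar>b j - a j\<bar> < e" for b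
  proof -
    have "(b j < 0 \<longleftrightarrow> a j < 0) \<and> (b j > 0 \<longleftrightarrow> a j > 0)" if "j < d" for j
    proof -
      have h: "\<bar>b j - a j\<bar> < \<bar>a j\<bar>" using e(2) \<open>\<forall>j<d. \<bar>b j - a j\<bar> < e\<close> that by force
      hence h2: "b j - a j < \<bar>a j\<bar> \<and> - (b j - a j) < \<bar>a j\<bar>" by (simp only: abs_less_iff)
      have "a j \<noteq> 0" using nz that by auto
      thus ?thesis
      proof (cases "a j < 0")
        case True
        hence "\<bar>a j\<bar> = - a j" by simp
        thus ?thesis using h2 True by linarith
      next
        case False
        hence "\<bar>a j\<bar> = a j" by simp
        thus ?thesis using h2 False \<open>a j \<noteq> 0\<close> by linarith
      qed
    qed
    thus ?thesis unfolding sigma_bullet_def by auto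
  qed
  thus ?thesis using e by blast
qed

lemma nbhd:
  assumes aR: "a \<in> R3 d" and d6: "d \<ge> 6"
  shows "\<exists>\<delta>>0. \<forall>b\<in>R3 d. b \<in> Nb d a \<delta> \<longrightarrow> (b \<in> A_set d \<longleftrightarrow> a \<in> A_set d) \<and>
            (a \<in> A_set d \<longrightarrow> (has_less d b \<longleftrightarrow> has_less d a))"
proof -
  have d1: "d \<ge> 1" using d6 by simp
  obtain \<delta>1 where d1p: "\<delta>1 > 0" and S1: "\<forall>b. (\<forall>j<d. \<bar>b j - a j\<bar> < \<delta>1) \<longrightarrow>
     pos_roots (monic_poly d b) = pos_roots (monic_poly d a) \<and>
     neg_roots (monic_poly d b) = neg_roots (monic_poly d a) \<and>
     (has_less d a \<longrightarrow> has_less d b) \<and> (all_greater d a \<longrightarrow> all_greater d b)"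
    using stable_R3[OF aR d1] by blast
  obtain \<delta>2 where d2p: "\<delta>2 > 0" and S2: "\<forall>b. (\<forall>j<d. \<bar>b j - a j\<bar> < \<delta>2) \<longrightarrow> (sigma_bullet d b \<longleftrightarrow> sigma_bullet d a)"
    using sb_stable[OF aR] by blast
  define \<delta> where "\<delta> = min \<delta>1 \<delta>2"
  have "(b \<in> A_set d \<longleftrightarrow> a \<in> A_set d) \<and> (a \<in> A_set d \<longrightarrow> (has_less d b \<longleftrightarrow> has_less d a))"
    if bR: "b \<in> R3 d" and bN: "b \<in> Nb d a \<delta>" for b
  proof -
    have c1: "\<forall>j<d. \<bar>b j - a j\<bar> < \<delta>1" and c2: "\<forall>j<d. \<bar>b j - a j\<bar> < \<delta>2"
      using bN unfolding Nb_def \<delta>_def by auto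
    have pn: "pos_roots (monic_poly d b) = pos_roots (monic_poly d a)"
      "neg_roots (monic_poly d b) = neg_roots (monic_poly d a)"
      and hl: "has_less d a \<Longrightarrow> has_less d b" and ag: "all_greater d a \<Longrightarrow> all_greater d b"
      using S1 c1 by blast+
    have sg: "sigma_bullet d b \<longleftrightarrow> sigma_bullet d a" using S2 c2 by blast
    have AA: "b \<in> A_set d \<longleftrightarrow> a \<in> A_set d" using bR aR pn sg unfolding A_set_def by auto
    have "has_less d b \<longleftrightarrow> has_less d a" if aA: "a \<in> A_set d"
    proof
      assume "has_less d a" thus "has_less d b" by (rule hl)
    next
      assume hb: "has_less d b"
      show "has_less d a"
      proof (rule ccontr)
        assume nh: "\<not> has_less d a"
        have "all_greater d a" unfolding all_greater_def
        proof (intro allI impI)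
          fix r s assume rs: "0 < r" "0 < s" "poly (monic_poly d a) r = 0" "poly (monic_poly d a) (-s) = 0"
          have "r \<noteq> s"
          proof
            assume "r = s"
            thus False using no_sym_root[of d a r] aA rs d6 unfolding A_set_def by auto
          qed
          moreover have "\<not> r < s" using nh rs unfolding has_less_def by blast
          ultimately show "s < r" by auto
        qed
        hence "all_greater d b" by (rule ag)
        from hb obtain r s where rs: "0 < r" "0 < s" "poly (monic_poly d b) r = 0" "poly (monic_poly d b) (-s) = 0" "r < s"
          unfolding has_less_def by blast
        have "s < r" using \<open>all_greater d b\<close> rs(1-4) unfolding all_greater_def by blast
        thus False using rs(5) by simp
      qed
    qed
    thus ?thesis using AA by blast
  qed
  moreover have "\<delta> > 0" unfolding \<delta>_def using d1p d2p by auto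
  ultimately show ?thesis by blast
qed

lemma main_from_ex:
  assumes d6: "d \<ge> 6"
    and exS: "\<exists>a\<in>A_set d. has_less d a" and exT: "\<exists>a\<in>A_set d. \<not> has_less d a"
  shows "A_set d \<noteq> {} \<and> \<not> connected (A_set d) \<and>
         (\<exists>\<C>. \<C> \<subseteq> components (R3 d) \<and> A_set d = \<Union>\<C> \<and>
              (\<exists>C1\<in>\<C>. \<exists>C2\<in>\<C>. C1 \<noteq> C2))"
proof -
  let ?R = "R3 d" and ?A = "A_set d"
  have AR: "?A \<subseteq> ?R" unfolding A_set_def by auto
  obtain \<delta> where dl: "\<And>a. a \<in> ?R \<Longrightarrow> \<delta> a > 0 \<and> (\<forall>b\<in>?R. b \<in> Nb d a (\<delta> a) \<longrightarrow> (b \<in> ?A \<longleftrightarrow> a \<in> ?A) \<and>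
            (a \<in> ?A \<longrightarrow> (has_less d b \<longleftrightarrow> has_less d a)))"
    using nbhd[OF _ d6] by metis
  define U1 where "U1 = (\<Union>a\<in>?A. Nb d a (\<delta> a))"
  define U2 where "U2 = (\<Union>a\<in>?R - ?A. Nb d a (\<delta> a))"
  define S where "S = {a\<in>?A. has_less d a}"
  define V1 where "V1 = (\<Union>a\<in>S. Nb d a (\<delta> a))"
  define V2 where "V2 = (\<Union>a\<in>?A - S. Nb d a (\<delta> a))"
  have oU: "open U1" "open U2" "open V1" "open V2" unfolding U1_def U2_def V1_def V2_def
    by (auto intro!: open_UN open_Nb)
  have selfN: "a \<in> Nb d a (\<delta> a)" if "a \<in> ?R" for a using dl[OF that] Nb_self by blast
  have RU: "?R \<subseteq> U1 \<union> U2" unfolding U1_def U2_def using selfN by blast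
  have UA: "U1 \<inter> ?R \<subseteq> ?A" unfolding U1_def using dl AR by blast
  have UD: "U1 \<inter> U2 \<inter> ?R = {}"
  proof -
    have "b \<notin> ?A" if "b \<in> U2" "b \<in> ?R" for b using that dl unfolding U2_def by blast
    thus ?thesis using UA by blast
  qed
  have AV: "?A \<subseteq> V1 \<union> V2" unfolding V1_def V2_def S_def using selfN AR by blast
  have VD: "V1 \<inter> V2 \<inter> ?A = {}"
  proof -
    have "has_less d b" if "b \<in> V1" "b \<in> ?A" for b
      using that dl AR unfolding V1_def S_def by blast
    moreover have "\<not> has_less d b" if "b \<in> V2" "b \<in> ?A" for b
      using that dl AR unfolding V2_def S_def by blast
    ultimately show ?thesis by blast
  qed
  obtain s where s: "s \<in> ?A" "has_less d s" using exS by blast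
  obtain t where t: "t \<in> ?A" "\<not> has_less d t" using exT by blast
  have sV: "s \<in> V1" unfolding V1_def S_def using s selfN AR by blast
  have tV: "t \<in> V2" unfolding V2_def S_def using t selfN AR by blast
  have notconn: "\<not> connected X" if "X \<subseteq> ?A" "s \<in> X" "t \<in> X" for X
  proof
    assume "connected X"
    from connectedD[OF this oU(3) oU(4)] have "V1 \<inter> X = {} \<or> V2 \<inter> X = {}"
      using that AV VD by blast
    thus False using sV tV that by blast
  qed
  have compA: "C \<subseteq> ?A" if "C \<in> components ?R" "C \<inter> ?A \<noteq> {}" for C
  proof -
    have Cc: "connected C" using in_components_connected[OF that(1)] .
    have CR: "C \<subseteq> ?R" using in_components_subset[OF that(1)] .
    from connectedD[OF Cc oU(1) oU(2)] have "U1 \<inter> C = {} \<or> U2 \<inter> C = {}"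
      using CR RU UD by blast
    moreover have "U1 \<inter> C \<noteq> {}" using that(2) selfN AR unfolding U1_def by blast
    ultimately have "U2 \<inter> C = {}" by blast
    thus ?thesis using CR RU UA by blast
  qed
  define \<C> where "\<C> = {C \<in> components ?R. C \<subseteq> ?A}"
  have Cs: "connected_component_set ?R s \<in> \<C>"
    unfolding \<C>_def using componentsI[of s ?R] s AR compA connected_component_refl[of s ?R] by blast
  have Ct: "connected_component_set ?R t \<in> \<C>"
    unfolding \<C>_def using componentsI[of t ?R] t AR compA connected_component_refl[of t ?R] by blast
  have neq: "connected_component_set ?R s \<noteq> connected_component_set ?R t"
  proof
    assume eq: "connected_component_set ?R s = connected_component_set ?R t"
    have "connected (connected_component_set ?R s)" by simp
    moreover have "connected_component_set ?R s \<subseteq> ?A" using Cs unfolding \<C>_def by auto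
    moreover have "s \<in> connected_component_set ?R s" using s AR connected_component_refl by blast
    moreover have "t \<in> connected_component_set ?R s" using eq t AR connected_component_refl by blast
    ultimately show False using notconn by blast
  qed
  have unionA: "?A = \<Union>\<C>"
  proof
    show "\<Union>\<C> \<subseteq> ?A" unfolding \<C>_def by auto
    show "?A \<subseteq> \<Union>\<C>"
    proof
      fix a assume a: "a \<in> ?A"
      hence "a \<in> connected_component_set ?R a" using AR connected_component_refl by blast
      moreover have "connected_component_set ?R a \<in> \<C>"
        unfolding \<C>_def using componentsI[of a ?R] a AR compA connected_component_refl[of a ?R] by blast
      ultimately show "a \<in> \<Union>\<C>" by blast
    qed
  qed
  show ?thesis
  proof (intro conjI)
    show "?A \<noteq> {}" using s by blast
    show "\<not> connected ?A" using notconn[of ?A] s t by blast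
    show "\<exists>\<C>. \<C> \<subseteq> components (R3 d) \<and> A_set d = \<Union>\<C> \<and> (\<exists>C1\<in>\<C>. \<exists>C2\<in>\<C>. C1 \<noteq> C2)"
    proof (rule exI[of _ \<C>], intro conjI)
      show "\<C> \<subseteq> components (R3 d)" unfolding \<C>_def by auto
      show "A_set d = \<Union>\<C>" by (rule unionA)
      show "\<exists>C1\<in>\<C>. \<exists>C2\<in>\<C>. C1 \<noteq> C2" using Cs Ct neq by metis
    qed
  qed
qed




fun Nf :: "nat \<Rightarrow> real poly" where
  "Nf 0 = 1"
| "Nf (Suc m) = [:of_nat (Suc m), 1:] * Nf m"

lemma lin_order: "order c [:-c, 1::real:] = 1"
  using order_power_n_n[of c 1] by simp

lemma lin_order0: "c \<noteq> c' \<Longrightarrow> order c [:-c', 1::real:] = 0"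
  by (rule order_0I) simp

lemma coeff_quad: "coeff ([:\<alpha>,\<beta>,\<gamma>:] * p) j = \<alpha> * coeff p j + (if j \<ge> 1 then \<beta> * coeff p (j-1) else 0) + (if j \<ge> 2 then \<gamma> * coeff p (j-2) else (0::real))"
proof (cases j)
  case 0 thus ?thesis by (simp add: mult_pCons_left)
next
  case (Suc k) thus ?thesis by (cases k) (simp_all add: mult_pCons_left algebra_simps)
qed

lemma coeff_lin: "coeff ([:c, 1:] * p) j = c * coeff p j + (if j \<ge> 1 then coeff p (j-1) else (0::real))"
  by (cases j) (simp_all add: mult_pCons_left)

lemma poly_Nf: "poly (Nf (Suc m)) x = (of_nat (Suc m) + x) * poly (Nf m) x"
  by (simp add: algebra_simps)

lemma Nf_root_Suc: "poly (Nf (Suc m)) x = 0 \<longleftrightarrow> (x = - of_nat (Suc m) \<or> poly (Nf m) x = 0)"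
proof -
  have "poly (Nf (Suc m)) x = 0 \<longleftrightarrow> (of_nat (Suc m) + x = 0 \<or> poly (Nf m) x = 0)"
    by (simp only: poly_Nf mult_eq_0_iff)
  moreover have "of_nat (Suc m) + x = 0 \<longleftrightarrow> x = - of_nat (Suc m)" by linarith
  ultimately show ?thesis by simp
qed

lemma Nf_roots: "poly (Nf m) x = 0 \<longleftrightarrow> (\<exists>i\<in>{1..m}. x = - of_nat i)"
proof (induction m)
  case 0 thus ?case by simp
next
  case (Suc m)
  have "poly (Nf (Suc m)) x = 0 \<longleftrightarrow> x = - of_nat (Suc m) \<or> poly (Nf m) x = 0"
    by (rule Nf_root_Suc)
  also have "\<dots> \<longleftrightarrow> (\<exists>i\<in>{1..Suc m}. x = - of_nat i)"
  proof
    assume "x = - of_nat (Suc m) \<or> poly (Nf m) x = 0"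
    thus "\<exists>i\<in>{1..Suc m}. x = - of_nat i"
    proof
      assume "x = - of_nat (Suc m)" thus ?thesis by (intro bexI[of _ "Suc m"]) auto
    next
      assume "poly (Nf m) x = 0" thus ?thesis using Suc.IH by auto
    qed
  next
    assume "\<exists>i\<in>{1..Suc m}. x = - of_nat i"
    then obtain i where i: "i \<in> {1..Suc m}" "x = - of_nat i" by blast
    show "x = - of_nat (Suc m) \<or> poly (Nf m) x = 0"
    proof (cases "i = Suc m")
      case True thus ?thesis using i by simp
    next
      case False thus ?thesis using i Suc.IH by auto
    qed
  qed
  finally show ?case .
qed

lemma Nf_coeff: "(\<forall>k\<le>m. coeff (Nf m) k > 0) \<and> (\<forall>k>m. coeff (Nf m) k = 0) \<and> coeff (Nf m) m = 1"
proof (induction m)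
  case 0 thus ?case by (simp add: coeff_1)
next
  case (Suc m)
  have cf: "coeff (Nf (Suc m)) k = of_nat (Suc m) * coeff (Nf m) k + (if k \<ge> 1 then coeff (Nf m) (k-1) else 0)" for k
    by (simp only: Nf.simps coeff_lin)
  have p1: "coeff (Nf (Suc m)) k > 0" if "k \<le> Suc m" for k
  proof (cases k)
    case 0 thus ?thesis using cf[of 0] Suc.IH by simp
  next
    case (Suc k')
    have "coeff (Nf m) k' > 0" using Suc.IH Suc that by auto
    moreover have "coeff (Nf m) k \<ge> 0" using Suc.IH by (cases "k \<le> m") (auto intro: less_imp_le)
    ultimately show ?thesis using cf[of k] Suc by (simp add: add_nonneg_pos)
  qed
  have p2: "coeff (Nf (Suc m)) k = 0" if "k > Suc m" for k
    using cf[of k] Suc.IH that by auto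
  have p3: "coeff (Nf (Suc m)) (Suc m) = 1" using cf[of "Suc m"] Suc.IH by auto
  show ?case using p1 p2 p3 by auto
qed

lemma Nf_nz: "Nf m \<noteq> 0"
  using Nf_coeff[of m] by auto

lemma Nf_order: "poly (Nf m) x = 0 \<Longrightarrow> order x (Nf m) = 1"
proof (induction m)
  case 0 thus ?case by simp
next
  case (Suc m)
  have eq: "[:of_nat (Suc m), 1:] = [:- (- of_nat (Suc m)), 1::real:]" by simp
  have o: "order x (Nf (Suc m)) = order x [:of_nat (Suc m), 1:] + order x (Nf m)"
    using order_mult[of "[:of_nat (Suc m), 1:]" "Nf m" x] Nf_nz[of "Suc m"] by simp
  show ?case
  proof (cases "x = - of_nat (Suc m)")
    case True
    have "poly (Nf m) x \<noteq> 0" using True Nf_roots[of m x] by auto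
    hence "order x (Nf m) = 0" by (rule order_0I)
    moreover have "order x [:of_nat (Suc m), 1:] = 1" unfolding eq True by (rule lin_order)
    ultimately show ?thesis using o by simp
  next
    case False
    have "poly (Nf m) x = 0" using Suc.prems False Nf_root_Suc by blast
    hence "order x (Nf m) = 1" by (rule Suc.IH)
    moreover have "order x [:of_nat (Suc m), 1:] = 0" unfolding eq using False by (intro lin_order0) auto
    ultimately show ?thesis using o by simp
  qed
qed

definition Lq :: "real \<Rightarrow> real \<Rightarrow> real poly" where "Lq p1 p2 = [:p1*p2, -(p1+p2), 1:]"
definition Fq :: "real \<Rightarrow> real poly" where "Fq R = [:2*R^2, -2*R, 1:]"

lemma Lq_factor: "Lq p1 p2 = [:-p1, 1:] * [:-p2, 1:]"
  unfolding Lq_def by (simp add: mult_pCons_left algebra_simps)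

lemma poly_Lq: "poly (Lq p1 p2) x = (x - p1) * (x - p2)"
  unfolding Lq_factor by (simp add: algebra_simps)

lemma poly_Fq: "R \<noteq> 0 \<Longrightarrow> poly (Fq R) x > 0"
proof -
  assume R: "R \<noteq> 0"
  have "poly (Fq R) x = (x - R)^2 + R^2" unfolding Fq_def by (simp add: algebra_simps power2_eq_square)
  moreover have "R^2 > 0" using R by simp
  ultimately show ?thesis by (smt (verit) zero_le_power2)
qed

definition Qc :: "real \<Rightarrow> real \<Rightarrow> real \<Rightarrow> nat \<Rightarrow> real poly" where
  "Qc R p1 p2 m = Fq R * (Lq p1 p2 * Nf m)"

lemma Qc_coeff_top:
  shows "coeff (Qc R p1 p2 m) (m+4) = 1" and "\<And>j. j > m + 4 \<Longrightarrow> coeff (Qc R p1 p2 m) j = 0"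
proof -
  let ?c = "coeff (Lq p1 p2 * Nf m)"
  have c: "?c j = p1*p2 * coeff (Nf m) j + (if j \<ge> 1 then (-(p1+p2)) * coeff (Nf m) (j-1) else 0) + (if j \<ge> 2 then 1 * coeff (Nf m) (j-2) else 0)" for j
    unfolding Lq_def by (rule coeff_quad)
  have q: "coeff (Qc R p1 p2 m) j = 2*R^2 * ?c j + (if j \<ge> 1 then (-2*R) * ?c (j-1) else 0) + (if j \<ge> 2 then 1 * ?c (j-2) else 0)" for j
    unfolding Qc_def Fq_def by (rule coeff_quad)
  have N0: "coeff (Nf m) k = 0" if "k > m" for k using Nf_coeff[of m] that by auto
  have N1: "coeff (Nf m) m = 1" using Nf_coeff[of m] by auto
  have c0: "?c j = 0" if "j > m + 2" for j using c[of j] N0 that by auto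
  have c1: "?c (m+2) = 1" using c[of "m+2"] N0 N1 by auto
  show "coeff (Qc R p1 p2 m) (m+4) = 1" using q[of "m+4"] c0 c1 by auto
  show "coeff (Qc R p1 p2 m) j = 0" if "j > m + 4" for j using q[of j] c0 that by auto
qed

lemma build:
  assumes d6: "d \<ge> 6" and m: "m = d - 4" and p: "0 < p1" "0 < p2" "p1 \<noteq> p2" and R: "R \<noteq> 0"
    and sig: "\<forall>j<d. if j = d - 1 \<or> j = 1 then coeff (Qc R p1 p2 m) j < 0 else coeff (Qc R p1 p2 m) j > 0"
  shows "\<exists>a\<in>A_set d. (p1 < 1 \<longrightarrow> has_less d a) \<and> (of_nat m < p1 \<and> of_nat m < p2 \<longrightarrow> \<not> has_less d a)"
proof -
  let ?Q = "Qc R p1 p2 m"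
  define a where "a j = (if j < d then coeff ?Q j else 0)" for j
  have dm: "d = m + 4" using m d6 by simp
  have mon: "monic_poly d a = ?Q"
  proof (rule poly_eqI)
    fix n
    have "coeff (monic_poly d a) n = (if n = d then 1 else 0) + (\<Sum>j<d. if j = n then a j else 0)"
      unfolding monic_poly_def by (simp add: coeff_sum coeff_monom)
    also have "(\<Sum>j<d. if j = n then a j else 0) = (if n < d then a n else 0)"
      by (simp add: sum.delta)
    finally have cm: "coeff (monic_poly d a) n = (if n = d then 1 else 0) + (if n < d then a n else 0)" .
    show "coeff (monic_poly d a) n = coeff ?Q n"
    proof (cases "n < d")
      case True thus ?thesis using cm unfolding a_def by simp
    next
      case False
      show ?thesis
      proof (cases "n = d")
        case True thus ?thesis using cm Qc_coeff_top(1)[of R p1 p2 m] dm by simp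
      next
        case False
        hence hn: "n > m + 4" using \<open>\<not> n < d\<close> dm by simp
        show ?thesis using cm Qc_coeff_top(2)[OF hn] \<open>\<not> n < d\<close> False by simp
      qed
    qed
  qed
  have Lnz: "Lq p1 p2 \<noteq> 0" unfolding Lq_def by simp
  have Fnz: "Fq R \<noteq> 0" unfolding Fq_def by simp
  have LNnz: "Lq p1 p2 * Nf m \<noteq> 0" using Lnz Nf_nz by simp
  have Qnz: "?Q \<noteq> 0" unfolding Qc_def using Fnz LNnz by simp
  have pQ: "poly ?Q x = poly (Fq R) x * ((x - p1) * (x - p2) * poly (Nf m) x)" for x
    unfolding Qc_def by (simp add: poly_Lq)
  have roots: "poly ?Q x = 0 \<longleftrightarrow> (x = p1 \<or> x = p2 \<or> (\<exists>i\<in>{1..m}. x = - of_nat i))" for x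
    using poly_Fq[OF R, of x] Nf_roots[of m x] unfolding pQ by auto
  have ord: "order x ?Q = 1" if "poly ?Q x = 0" for x
  proof -
    have o1: "order x ?Q = order x (Fq R) + (order x [:-p1,1:] + order x [:-p2,1:] + order x (Nf m))"
      unfolding Qc_def using order_mult[OF Qnz[unfolded Qc_def], of x] order_mult[OF LNnz, of x]
        order_mult[of "[:-p1,1:]" "[:-p2,1:]" x] Lnz unfolding Lq_factor by simp
    have oF: "order x (Fq R) = 0" using poly_Fq[OF R, of x] by (intro order_0I) auto
    from that consider "x = p1" | "x = p2" | "\<exists>i\<in>{1..m}. x = - of_nat i" using roots by blast
    thus ?thesis
    proof cases
      case 1
      have "order x (Nf m) = 0" using 1 p Nf_roots[of m x] by (intro order_0I) auto
      thus ?thesis using o1 oF 1 lin_order[of p1] lin_order0[of p1 p2] p by simp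
    next
      case 2
      have "order x (Nf m) = 0" using 2 p Nf_roots[of m x] by (intro order_0I) auto
      thus ?thesis using o1 oF 2 lin_order[of p2] lin_order0[of p2 p1] p by simp
    next
      case 3
      then obtain i where i: "i \<in> {1..m}" "x = - of_nat i" by blast
      have xn: "x < 0" using i by auto
      have "order x (Nf m) = 1" using Nf_order Nf_roots[of m x] 3 by blast
      moreover have "order x [:-p1,1:] = 0" "order x [:-p2,1:] = 0" using xn p by (auto intro: lin_order0)
      ultimately show ?thesis using o1 oF by simp
    qed
  qed
  have aR: "a \<in> R3 d"
    unfolding R3_def coeff_space_def
  proof (intro CollectI conjI allI impI)
    show "j \<ge> d \<Longrightarrow> a j = 0" for j unfolding a_def by simp
    show "j < d \<Longrightarrow> a j \<noteq> 0" for j unfolding a_def using sig by (auto split: if_splits)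
    show "poly (monic_poly d a) x = 0 \<Longrightarrow> order x (monic_poly d a) = 1" for x unfolding mon by (rule ord)
  qed
  have sb: "sigma_bullet d a" unfolding sigma_bullet_def a_def using sig by auto
  have pos: "{x. 0 < x \<and> poly ?Q x = 0} = {p1, p2}" using roots p by auto
  have neg: "{x. x < 0 \<and> poly ?Q x = 0} = (\<lambda>i. - of_nat i) ` {1..m}" using roots p by auto
  have pr: "pos_roots (monic_poly d a) = 2" unfolding mon pos_roots_def pos using p by simp
  have nr: "neg_roots (monic_poly d a) = d - 4" unfolding mon neg_roots_def neg
    by (subst card_image) (auto simp: inj_on_def m)
  have aA: "a \<in> A_set d" unfolding A_set_def using aR sb pr nr by auto
  have hl: "has_less d a" if "p1 < 1"
    unfolding has_less_def mon
    apply (rule exI[of _ p1], rule exI[of _ 1])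
    using that p roots[of p1] roots[of "-1"] m d6 by auto
  have nhl: "\<not> has_less d a" if "of_nat m < p1" "of_nat m < p2"
  proof
    assume "has_less d a"
    then obtain r s where rs: "0 < r" "0 < s" "poly ?Q r = 0" "poly ?Q (-s) = 0" "r < s"
      unfolding has_less_def mon by blast
    have "r = p1 \<or> r = p2" using roots[of r] rs by auto
    moreover obtain i where "i \<in> {1..m}" "-s = - of_nat i" using roots[of "-s"] rs p by auto
    hence "s \<le> of_nat m" by auto
    ultimately show False using rs that by auto
  qed
  show ?thesis using aA hl nhl by blast
qed

lemma ev_top_pos:
  fixes A B C :: real
  assumes C: "C > 0"
  shows "eventually (\<lambda>R. 0 < A + B*R + C*R^2) at_top"
proof -
  define N where "N = max 1 ((\<bar>A\<bar> + \<bar>B\<bar> + 1) / C)"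
  have "0 < A + B*R + C*R^2" if R: "R \<ge> N" for R
  proof -
    have R1: "R \<ge> 1" using R unfolding N_def by auto
    have "(\<bar>A\<bar> + \<bar>B\<bar> + 1) / C \<le> R" using R unfolding N_def by auto
    hence CR: "\<bar>A\<bar> + \<bar>B\<bar> + 1 \<le> C * R" using C by (simp add: pos_divide_le_eq mult.commute)
    have e1: "C*R^2 = R * (C*R)" by (simp add: power2_eq_square algebra_simps)
    have e2: "R * (\<bar>A\<bar> + \<bar>B\<bar> + 1) \<le> R * (C*R)" using CR R1 by (intro mult_left_mono) auto
    have e3: "\<bar>A\<bar> \<le> R * \<bar>A\<bar>" using R1 by (simp add: mult_le_cancel_right1)
    have "\<bar>B * R\<bar> = \<bar>B\<bar> * R" using R1 by (simp add: abs_mult)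
    moreover have "- \<bar>B * R\<bar> \<le> B * R" by (cases "B * R \<ge> 0") auto
    ultimately have e4: "- (\<bar>B\<bar> * R) \<le> B * R" by simp
    have e5: "- \<bar>A\<bar> \<le> A" by simp
    have "R * (\<bar>A\<bar> + \<bar>B\<bar> + 1) = R * \<bar>A\<bar> + \<bar>B\<bar> * R + R" by (simp add: algebra_simps)
    thus ?thesis using e1 e2 e3 e4 e5 R1 by linarith
  qed
  thus ?thesis unfolding eventually_at_top_linorder by blast
qed

lemma ev_top_neg:
  fixes A B C :: real
  assumes C: "C < 0"
  shows "eventually (\<lambda>R. A + B*R + C*R^2 < 0) at_top"
  using ev_top_pos[of "-C" "-A" "-B"] C by (auto elim!: eventually_mono)

lemma ev_top_lin:
  fixes A B :: real
  assumes B: "B < 0"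
  shows "eventually (\<lambda>R. A + B*R < 0) at_top"
proof -
  have "eventually (\<lambda>R. R > \<bar>A\<bar> / (-B)) at_top" by (rule eventually_gt_at_top)
  thus ?thesis
  proof (rule eventually_mono)
    fix R assume h: "R > \<bar>A\<bar> / (-B)"
    have nb: "-B > 0" using B by simp
    have "\<bar>A\<bar> < R * (-B)" using h pos_divide_less_eq[OF nb] by blast
    thus "A + B*R < 0" by (simp add: algebra_simps)
  qed
qed

lemma ev_zero_pos:
  fixes A B C :: real
  assumes A: "A > 0"
  shows "eventually (\<lambda>r. 0 < A + B*r + C*r^2) (at_right 0)"
proof -
  have "((\<lambda>r. A + B*r + C*r^2) \<longlongrightarrow> A + B*0 + C*0^2) (at_right 0)"
    by (intro tendsto_intros)
  hence "((\<lambda>r. A + B*r + C*r^2) \<longlongrightarrow> A) (at_right 0)" by simp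
  from order_tendstoD(1)[OF this A] show ?thesis .
qed

lemma ev_zero_neg:
  fixes A B C :: real
  assumes A: "A < 0"
  shows "eventually (\<lambda>r. A + B*r + C*r^2 < 0) (at_right 0)"
proof -
  have "((\<lambda>r. A + B*r + C*r^2) \<longlongrightarrow> A + B*0 + C*0^2) (at_right 0)"
    by (intro tendsto_intros)
  hence "((\<lambda>r. A + B*r + C*r^2) \<longlongrightarrow> A) (at_right 0)" by simp
  from order_tendstoD(2)[OF this A] show ?thesis .
qed




lemma cLN: "coeff (Lq p1 p2 * Nf m) j = p1*p2 * coeff (Nf m) j - (if j \<ge> 1 then (p1+p2) * coeff (Nf m) (j-1) else 0) + (if j \<ge> 2 then coeff (Nf m) (j-2) else 0)"
  unfolding Lq_def coeff_quad by (simp add: algebra_simps)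

lemma cQ: "coeff (Qc R p1 p2 m) j = 2*R^2 * coeff (Lq p1 p2 * Nf m) j - (if j \<ge> 1 then 2*R * coeff (Lq p1 p2 * Nf m) (j-1) else 0) + (if j \<ge> 2 then coeff (Lq p1 p2 * Nf m) (j-2) else 0)"
  unfolding Qc_def Fq_def coeff_quad by simp

lemma ex_small:
  assumes d6: "d \<ge> 6"
  shows "\<exists>a\<in>A_set d. has_less d a"
proof -
  define m where "m = d - 4"
  have m2: "m \<ge> 2" and dm: "d = m + 4" using d6 unfolding m_def by auto
  define n where "n = coeff (Nf m)"
  have npos: "k \<le> m \<Longrightarrow> n k > 0" and nzero: "k > m \<Longrightarrow> n k = 0" and nm: "n m = 1" for k
    using Nf_coeff[of m] unfolding n_def by auto
  have ev1: "eventually (\<lambda>e. \<forall>j\<in>{2..m+2}. 0 < n (j-2) + (-3 * n (j-1)) * e + (2 * n j) * e^2) (at_right 0)"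
    apply (rule eventually_ball_finite, simp, rule ballI, rule ev_zero_pos)
    by (rule npos) auto
  have ev2: "eventually (\<lambda>e. (-3 * n 0) + (2 * n 1) * e + 0 * e^2 < 0) (at_right 0)"
    by (rule ev_zero_neg) (use npos[of 0] in auto)
  have ev3: "eventually (\<lambda>e. (-1/2) + 1 * e + 0 * e^2 < 0) (at_right (0::real))"
    by (rule ev_zero_neg) auto
  have ev4: "eventually (\<lambda>e. 0 < e) (at_right (0::real))" by (rule eventually_at_right_less)
  obtain e where e1: "\<forall>j\<in>{2..m+2}. 0 < n (j-2) + (-3 * n (j-1)) * e + (2 * n j) * e^2"
    and e2: "(-3 * n 0) + (2 * n 1) * e + 0 * e^2 < 0" and e3: "(-1/2) + 1 * e + 0 * e^2 < 0" and e4: "0 < e"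
    using eventually_happens'[OF trivial_limit_at_right_real eventually_conj[OF ev1 eventually_conj[OF ev2 eventually_conj[OF ev3 ev4]]]]
    by blast
  define c where "c = coeff (Lq e (2*e) * Nf m)"
  have cf: "c j = 2*e^2 * n j - (if j \<ge> 1 then 3*e * n (j-1) else 0) + (if j \<ge> 2 then n (j-2) else 0)" for j
    unfolding c_def n_def cLN by (simp add: power2_eq_square algebra_simps)
  have c0: "c 0 > 0" using cf[of 0] npos[of 0] e4 by simp
  have c1: "c 1 < 0"
  proof -
    have "c 1 = e * ((-3 * n 0) + (2 * n 1) * e)" using cf[of 1] by (simp add: power2_eq_square algebra_simps)
    moreover have "(-3 * n 0) + (2 * n 1) * e < 0" using e2 by simp
    ultimately show ?thesis using e4 by (simp add: mult_pos_neg)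
  qed
  have cj: "c j > 0" if "2 \<le> j" "j \<le> m + 2" for j
  proof -
    have "c j = n (j-2) + (-3 * n (j-1)) * e + (2 * n j) * e^2" using cf[of j] that by (simp add: algebra_simps)
    thus ?thesis using e1 that by auto
  qed
  have cm2: "c (m+2) = 1" using cf[of "m+2"] nzero[of "m+2"] nzero[of "m+1"] nm by simp
  have ev5: "eventually (\<lambda>R. 0 < 0 + 0 * R + (2 * c 0) * R^2) at_top" by (rule ev_top_pos) (use c0 in simp)
  have ev6: "eventually (\<lambda>R. 0 + (-2 * c 0) * R + (2 * c 1) * R^2 < 0) at_top" by (rule ev_top_neg) (use c1 in simp)
  have ev7: "eventually (\<lambda>R. \<forall>j\<in>{2..m+2}. 0 < c (j-2) + (-2 * c (j-1)) * R + (2 * c j) * R^2) at_top"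
    apply (rule eventually_ball_finite, simp, rule ballI, rule ev_top_pos)
    using cj by auto
  have ev8: "eventually (\<lambda>R. c (m+1) + (-2) * R < 0) at_top" by (rule ev_top_lin) simp
  have ev9: "eventually (\<lambda>R. (0::real) < R) at_top" by (rule eventually_gt_at_top)
  obtain R where R5: "0 < 0 + 0 * R + (2 * c 0) * R^2" and R6: "0 + (-2 * c 0) * R + (2 * c 1) * R^2 < 0"
    and R7: "\<forall>j\<in>{2..m+2}. 0 < c (j-2) + (-2 * c (j-1)) * R + (2 * c j) * R^2"
    and R8: "c (m+1) + (-2) * R < 0" and R9: "0 < R"
    using eventually_happens'[OF trivial_limit_at_top_linorder eventually_conj[OF ev5 eventually_conj[OF ev6 eventually_conj[OF ev7 eventually_conj[OF ev8 ev9]]]]]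
    by blast
  have cz: "c j = 0" if "j > m + 2" for j using cf[of j] nzero that by auto
  have qf: "coeff (Qc R e (2*e) m) j = 2*R^2 * c j - (if j \<ge> 1 then 2*R * c (j-1) else 0) + (if j \<ge> 2 then c (j-2) else 0)" for j
    unfolding c_def by (rule cQ)
  have sig: "\<forall>j<d. if j = d - 1 \<or> j = 1 then coeff (Qc R e (2*e) m) j < 0 else coeff (Qc R e (2*e) m) j > 0"
  proof (intro allI impI)
    fix j assume j: "j < d"
    consider "j = 0" | "j = 1" | "2 \<le> j \<and> j \<le> m + 2" | "j = m + 3" using j dm by linarith
    thus "if j = d - 1 \<or> j = 1 then coeff (Qc R e (2*e) m) j < 0 else coeff (Qc R e (2*e) m) j > 0"
    proof cases
      case 1 thus ?thesis using qf[of 0] R5 dm by simp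
    next
      case 2 thus ?thesis using qf[of 1] R6 dm by (simp add: algebra_simps)
    next
      case 3
      have "coeff (Qc R e (2*e) m) j = c (j-2) + (-2 * c (j-1)) * R + (2 * c j) * R^2"
        using qf[of j] 3 by (simp add: algebra_simps)
      thus ?thesis using R7 3 dm by auto
    next
      case 4
      have "coeff (Qc R e (2*e) m) j = c (m+1) + (-2) * R"
        using qf[of j] 4 cz[of "m+3"] cm2 by (simp add: algebra_simps)
      thus ?thesis using R8 4 dm by auto
    qed
  qed
  have "\<exists>a\<in>A_set d. (e < 1 \<longrightarrow> has_less d a) \<and> (of_nat m < e \<and> of_nat m < 2*e \<longrightarrow> \<not> has_less d a)"
    by (rule build[OF d6 m_def e4 _ _ _ sig]) (use e4 R9 in auto)
  thus ?thesis using e3 by auto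
qed

lemma ex_large:
  assumes d6: "d \<ge> 6"
  shows "\<exists>a\<in>A_set d. \<not> has_less d a"
proof -
  define m where "m = d - 4"
  have m2: "m \<ge> 2" and dm: "d = m + 4" using d6 unfolding m_def by auto
  define n where "n = coeff (Nf m)"
  have npos: "k \<le> m \<Longrightarrow> n k > 0" and nzero: "k > m \<Longrightarrow> n k = 0" and nm: "n m = 1" for k
    using Nf_coeff[of m] unfolding n_def by auto
  define Aj where "Aj j = (if j \<ge> 2 then n (j-2) else 0)" for j
  define Bj where "Bj j = (if j \<ge> 1 then -3 * n (j-1) else 0)" for j
  have ev1: "eventually (\<lambda>L. \<forall>j\<in>{0..m}. 0 < Aj j + Bj j * L + (2 * n j) * L^2) at_top"
    apply (rule eventually_ball_finite, simp, rule ballI, rule ev_top_pos)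
    using npos by auto
  have ev2: "eventually (\<lambda>L. n (m-1) + (-3) * L < 0) at_top" by (rule ev_top_lin) simp
  have ev3: "eventually (\<lambda>L. real m < L) at_top" by (rule eventually_gt_at_top)
  obtain L where L1: "\<forall>j\<in>{0..m}. 0 < Aj j + Bj j * L + (2 * n j) * L^2"
    and L2: "n (m-1) + (-3) * L < 0" and L3: "real m < L"
    using eventually_happens'[OF trivial_limit_at_top_linorder eventually_conj[OF ev1 eventually_conj[OF ev2 ev3]]]
    by blast
  have L0: "L > 0" using L3 by linarith
  define c where "c = coeff (Lq L (2*L) * Nf m)"
  have cf: "c j = 2*L^2 * n j - (if j \<ge> 1 then 3*L * n (j-1) else 0) + (if j \<ge> 2 then n (j-2) else 0)" for j
    unfolding c_def n_def cLN by (simp add: power2_eq_square algebra_simps)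
  have cpos: "c j > 0" if "j \<le> m" for j
  proof -
    have "c j = Aj j + Bj j * L + (2 * n j) * L^2"
    proof -
      consider "j = 0" | "j = 1" | "j \<ge> 2" by linarith
      thus ?thesis
      proof cases
        case 1 thus ?thesis using cf[of j] unfolding Aj_def Bj_def by (simp add: algebra_simps)
      next
        case 2 thus ?thesis using cf[of j] unfolding Aj_def Bj_def by (simp add: algebra_simps)
      next
        case 3 thus ?thesis using cf[of j] unfolding Aj_def Bj_def by (simp add: algebra_simps)
      qed
    qed
    thus ?thesis using L1 that by auto
  qed
  have cm1: "c (m+1) < 0"
  proof -
    have "c (m+1) = n (m-1) + (-3) * L" using cf[of "m+1"] nzero[of "m+1"] nm m2
      by (simp add: algebra_simps numeral_2_eq_2)
    thus ?thesis using L2 by simp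
  qed
  have cm2: "c (m+2) = 1" using cf[of "m+2"] nzero[of "m+2"] nzero[of "m+1"] nm by simp
  have cz: "c j = 0" if "j > m + 2" for j using cf[of j] nzero that by auto
  have ev5: "eventually (\<lambda>r. (-2 * c 0) + (2 * c 1) * r + 0 * r^2 < 0) (at_right 0)"
    by (rule ev_zero_neg) (use cpos[of 0] in simp)
  have ev6: "eventually (\<lambda>r. \<forall>j\<in>{2..m+2}. 0 < c (j-2) + (-2 * c (j-1)) * r + (2 * c j) * r^2) (at_right 0)"
    apply (rule eventually_ball_finite, simp, rule ballI, rule ev_zero_pos)
    by (rule cpos) auto
  have ev7: "eventually (\<lambda>r. c (m+1) + (-2 * c (m+2)) * r + (2 * c (m+3)) * r^2 < 0) (at_right 0)"
    by (rule ev_zero_neg) (rule cm1)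
  have ev8: "eventually (\<lambda>r. 0 < r) (at_right (0::real))" by (rule eventually_at_right_less)
  obtain r where r5: "(-2 * c 0) + (2 * c 1) * r + 0 * r^2 < 0"
    and r6: "\<forall>j\<in>{2..m+2}. 0 < c (j-2) + (-2 * c (j-1)) * r + (2 * c j) * r^2"
    and r7: "c (m+1) + (-2 * c (m+2)) * r + (2 * c (m+3)) * r^2 < 0" and r8: "0 < r"
    using eventually_happens'[OF trivial_limit_at_right_real eventually_conj[OF ev5 eventually_conj[OF ev6 eventually_conj[OF ev7 ev8]]]]
    by blast
  have qf: "coeff (Qc r L (2*L) m) j = 2*r^2 * c j - (if j \<ge> 1 then 2*r * c (j-1) else 0) + (if j \<ge> 2 then c (j-2) else 0)" for j
    unfolding c_def by (rule cQ)
  have sig: "\<forall>j<d. if j = d - 1 \<or> j = 1 then coeff (Qc r L (2*L) m) j < 0 else coeff (Qc r L (2*L) m) j > 0"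
  proof (intro allI impI)
    fix j assume j: "j < d"
    consider "j = 0" | "j = 1" | "2 \<le> j \<and> j \<le> m + 2" | "j = m + 3" using j dm by linarith
    thus "if j = d - 1 \<or> j = 1 then coeff (Qc r L (2*L) m) j < 0 else coeff (Qc r L (2*L) m) j > 0"
    proof cases
      case 1 thus ?thesis using qf[of 0] cpos[of 0] r8 dm by simp
    next
      case 2
      have "coeff (Qc r L (2*L) m) j = r * ((-2 * c 0) + (2 * c 1) * r + 0 * r^2)"
        using qf[of 1] 2 by (simp add: power2_eq_square algebra_simps)
      moreover have "r * ((-2 * c 0) + (2 * c 1) * r + 0 * r^2) < 0" using r5 r8 by (simp add: mult_pos_neg)
      ultimately show ?thesis using 2 dm by simp
    next
      case 3
      have "coeff (Qc r L (2*L) m) j = c (j-2) + (-2 * c (j-1)) * r + (2 * c j) * r^2"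
        using qf[of j] 3 by (simp add: algebra_simps)
      thus ?thesis using r6 3 dm by auto
    next
      case 4
      have "coeff (Qc r L (2*L) m) j = c (m+1) + (-2 * c (m+2)) * r + (2 * c (m+3)) * r^2"
        using qf[of j] 4 by (simp add: algebra_simps numeral_3_eq_3)
      thus ?thesis using r7 4 dm by auto
    qed
  qed
  have "\<exists>a\<in>A_set d. (L < 1 \<longrightarrow> has_less d a) \<and> (of_nat m < L \<and> of_nat m < 2*L \<longrightarrow> \<not> has_less d a)"
    by (rule build[OF d6 m_def L0 _ _ _ sig]) (use L0 r8 in auto)
  thus ?thesis using L3 L0 by auto
qed


theorem theorem1:
  fixes d :: nat
  assumes "d \<ge> 6"
  shows "A_set d \<noteq> {} \<and> \<not> connected (A_set d) \<and>
         (\<exists>\<C>. \<C> \<subseteq> components (R3 d) \<and> A_set d = \<Union>\<C> \<and>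
              (\<exists>C1\<in>\<C>. \<exists>C2\<in>\<C>. C1 \<noteq> C2))"
  by (rule main_from_ex[OF assms ex_small[OF assms] ex_large[OF assms]])

end
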